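(* Let $G$ be a finite two-player zero-sum extensive form game with perfect recall, and let $\boldsymbol\sigma^0,\boldsymbol\sigma^1,\dots$ be the strategy profiles generated by CFR$^+$ with alternating updates, so that Player 1's regret-like values are updated using $\boldsymbol{v}^{(\sigma^t_1,\sigma^t_2)}$ and Player 2's using $\boldsymbol{v}^{(\sigma^{t+1}_1,\sigma^t_2)}$. Let $l:=\max_{y,z\in Z}(u_1(y)-u_1(z))$, let $k:=\max_I|A(I)|$, and let $|\mathcal{I}|$ be the total number of information sets of Players 1 and 2. Then for every $t\ge1$, the exploitability of the weighted average profile $$\Bigl(\tfrac{2}{t^2+t}\textstyle\sum_{i=1}^{t}i\,\sigma^i_1,\ \tfrac{2}{t^2+t}\sum_{i=0}^{t-1}(i+1)\,\sigma^i_2\Bigr)$$ is at most $2|\mathcal{I}|\,l\sqrt{k/t}$.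
   Context: Extensive form game: a finite tree of histories $h$ (sequences of actions from the root), terminal histories $Z$, actions $A(h)$ at nonterminal $h$, an acting player $P(h)\in\{1,2,c\}$ where $c$ is chance acting with fixed probabilities, utilities $u_1(z)=-u_2(z)$ at terminals, and for each player a partition of that player's histories into information sets $I$ (all $h\in I$ share the same legal actions $A(I)$); perfect recall as usual. A strategy $\sigma_p$ gives a distribution $\boldsymbol{\sigma}_p(I)$ over $A(I)$ at each player-$p$ information set; $u^{\boldsymbol\sigma}_p$ is player $p$'s expected utility. For a profile $\boldsymbol{\sigma}$ and terminal $z$, $\pi^{\boldsymbol\sigma}_{-p}(z)$ is the product of probabilities of chance's and the opponent's actions on the path to $z$; for $h\sqsubseteq z$, $\pi^{\boldsymbol\sigma}_p(z\mid h)$ is the product of probabilities under $\sigma_p$ of $p$'s actions from $h$ to $z$. Counterfactual values: $v^{\boldsymbol\sigma}_p(h):=\sum_{z\in Z,\,h\sqsubseteq z}\pi^{\boldsymbol\sigma}_{-p}(z)\pi^{\boldsymbol\sigma}_p(z\mid h)u_p(z)$ and, for an information set $I$ of player $p$, $v^{\boldsymbol\sigma}(I)_a:=\sum_{h\in I}v^{\boldsymbol\sigma}_p(ha)$. With $x^+=\max(x,0)$ componentwise and $\boldsymbol{\sigma}_{\mathrm{rm}}(\boldsymbol{x}):=\boldsymbol{x}^+/(\boldsymbol{1}\cdot\boldsymbol{x}^+)$ if some $x_a>0$, else the uniform distribution, CFR$^+$ with alternating updates keeps $\boldsymbol{q}^t(I)$ for each information set, with $\boldsymbol{q}^0(I)=\boldsymbol0$,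 plays $\boldsymbol\sigma^t(I)=\boldsymbol{\sigma}_{\mathrm{rm}}(\boldsymbol{q}^t(I))$, and sets $\boldsymbol{q}^{t+1}(I)=(\boldsymbol{q}^t(I)+\boldsymbol{v}^t(I)-(\boldsymbol\sigma^t(I)\cdot\boldsymbol{v}^t(I))\boldsymbol1)^+$, where $\boldsymbol{v}^t(I)=\boldsymbol{v}^{(\sigma^t_1,\sigma^t_2)}(I)$ for Player-1 information sets and $\boldsymbol{v}^t(I)=\boldsymbol{v}^{(\sigma^{t+1}_1,\sigma^t_2)}(I)$ for Player-2 information sets. A weighted average $\sum_i w_i\sigma^i_p$ (weights summing to 1) denotes the strategy of player $p$ whose reach probabilities of every history are the corresponding weighted average of the reach probabilities of the $\sigma^i_p$ (equivalently, the mixture with weights $w_i$). Exploitability: $\mathrm{expl}(\sigma_1,\sigma_2):=\max_{\sigma^*_1}u_1^{(\sigma^*_1,\sigma_2)}+\max_{\sigma^*_2}u_2^{(\sigma_1,\sigma^*_2)}$. *)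

theory Defs
  imports Complex_Main
begin

text \<open>Histories are action lists; the game tree is the
prefix-closed finite set hist. plr h is the acting player at a nonterminal history
(0 = chance, 1, 2). chn h a is chance's probability of action a at h. util z is
u_1(z) (with u_2 = - u_1). iset h is the information set (a set of histories)
containing the player-1/2 history h.\<close>

record 'a efg =
  hist :: "'a list set"
  plr :: "'a list \<Rightarrow> nat"
  chn :: "'a list \<Rightarrow> 'a \<Rightarrow> real"
  util :: "'a list \<Rightarrow> real"
  iset :: "'a list \<Rightarrow> 'a list set"

definition acts :: "'a efg \<Rightarrow> 'a list \<Rightarrow> 'a set" where
  "acts G h = {a. h @ [a] \<in> hist G}"

definition terminals :: "'a efg \<Rightarrow> 'a list set" where
  "terminals G = {z \<in> hist G. acts G z = {}}"

definition nonterm :: "'a efg \<Rightarrow> 'a list \<Rightarrow> bool" where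
  "nonterm G h \<longleftrightarrow> h \<in> hist G \<and> acts G h \<noteq> {}"

definition infosets :: "'a efg \<Rightarrow> nat \<Rightarrow> 'a list set set" where
  "infosets G p = {iset G h | h. nonterm G h \<and> plr G h = p}"

text \<open>Legal actions A(I) of an information set (all its histories share them).\<close>
definition iacts :: "'a efg \<Rightarrow> 'a list set \<Rightarrow> 'a set" where
  "iacts G I = (\<Union>h\<in>I. acts G h)"

definition own_seq :: "'a efg \<Rightarrow> nat \<Rightarrow> 'a list \<Rightarrow> ('a list set \<times> 'a) list" where
  "own_seq G p h = [(iset G (take i h), h ! i). i \<leftarrow> [0..<length h], plr G (take i h) = p]"

definition wf_game :: "'a efg \<Rightarrow> bool" where
  "wf_game G \<longleftrightarrow>
     finite (hist G) \<and> [] \<in> hist G \<and>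
     (\<forall>h\<in>hist G. \<forall>i. take i h \<in> hist G) \<and>
     (\<forall>h. nonterm G h \<longrightarrow> plr G h \<in> {0, 1, 2}) \<and>
     (\<forall>h. nonterm G h \<and> plr G h = 0 \<longrightarrow>
        (\<forall>a\<in>acts G h. 0 \<le> chn G h a) \<and> sum (chn G h) (acts G h) = 1) \<and>
     (\<forall>h. nonterm G h \<and> plr G h \<in> {1, 2} \<longrightarrow>
        h \<in> iset G h \<and>
        (\<forall>h'\<in>iset G h. nonterm G h' \<and> plr G h' = plr G h \<and>
                        iset G h' = iset G h \<and> acts G h' = acts G h)) \<and>
     (\<forall>h h'. nonterm G h \<and> plr G h \<in> {1, 2} \<and> h' \<in> iset G h \<longrightarrow>
        own_seq G (plr G h) h = own_seq G (plr G h) h')"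

definition strategy :: "'a efg \<Rightarrow> nat \<Rightarrow> ('a list set \<Rightarrow> 'a \<Rightarrow> real) \<Rightarrow> bool" where
  "strategy G p s \<longleftrightarrow>
     (\<forall>I\<in>infosets G p. (\<forall>a\<in>iacts G I. 0 \<le> s I a) \<and> sum (s I) (iacts G I) = 1)"

definition reach :: "'a efg \<Rightarrow> nat \<Rightarrow> ('a list set \<Rightarrow> 'a \<Rightarrow> real) \<Rightarrow> 'a list \<Rightarrow> real" where
  "reach G p s h = (\<Prod>i\<in>{i. i < length h \<and> plr G (take i h) = p}. s (iset G (take i h)) (h ! i))"

definition chance_reach :: "'a efg \<Rightarrow> 'a list \<Rightarrow> real" where
  "chance_reach G h = (\<Prod>i\<in>{i. i < length h \<and> plr G (take i h) = 0}. chn G (take i h) (h ! i))"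

definition cond_reach :: "'a efg \<Rightarrow> nat \<Rightarrow> ('a list set \<Rightarrow> 'a \<Rightarrow> real) \<Rightarrow> 'a list \<Rightarrow> 'a list \<Rightarrow> real" where
  "cond_reach G p s h z =
     (\<Prod>i\<in>{i. length h \<le> i \<and> i < length z \<and> plr G (take i z) = p}. s (iset G (take i z)) (z ! i))"

text \<open>Player 1's expected utility, given the reach-probability functions of both players
(so that weighted averages of strategies, defined through their reach probabilities,
can be plugged in directly).\<close>
definition exp_util :: "'a efg \<Rightarrow> ('a list \<Rightarrow> real) \<Rightarrow> ('a list \<Rightarrow> real) \<Rightarrow> real" where
  "exp_util G r1 r2 = (\<Sum>z\<in>terminals G. chance_reach G z * r1 z * r2 z * util G z)"

definition expl :: "'a efg \<Rightarrow> ('a list \<Rightarrow> real) \<Rightarrow> ('a list \<Rightarrow> real) \<Rightarrow> real" where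
  "expl G r1 r2 =
     (SUP s\<in>{s. strategy G 1 s}. exp_util G (reach G 1 s) r2) +
     (SUP s\<in>{s. strategy G 2 s}. - exp_util G r1 (reach G 2 s))"

definition cf_value :: "'a efg \<Rightarrow> nat \<Rightarrow> ('a list set \<Rightarrow> 'a \<Rightarrow> real) \<Rightarrow>
    ('a list set \<Rightarrow> 'a \<Rightarrow> real) \<Rightarrow> 'a list \<Rightarrow> real" where
  "cf_value G p s1 s2 h =
     (\<Sum>z\<in>{z\<in>terminals G. \<exists>w. z = h @ w}.
        chance_reach G z * (if p = 1 then reach G 2 s2 z else reach G 1 s1 z) *
        cond_reach G p (if p = 1 then s1 else s2) h z *
        (if p = 1 then util G z else - util G z))"

definition cf_vec :: "'a efg \<Rightarrow> nat \<Rightarrow> ('a list set \<Rightarrow> 'a \<Rightarrow> real) \<Rightarrow>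
    ('a list set \<Rightarrow> 'a \<Rightarrow> real) \<Rightarrow> 'a list set \<Rightarrow> 'a \<Rightarrow> real" where
  "cf_vec G p s1 s2 I a = (\<Sum>h\<in>I. cf_value G p s1 s2 (h @ [a]))"

definition rm :: "('a \<Rightarrow> real) \<Rightarrow> 'a set \<Rightarrow> 'a \<Rightarrow> real" where
  "rm x A a = (if \<exists>b\<in>A. 0 < x b then max (x a) 0 / (\<Sum>b\<in>A. max (x b) 0)
               else 1 / real (card A))"

definition cfr_strat :: "'a efg \<Rightarrow> (nat \<Rightarrow> 'a list set \<Rightarrow> 'a \<Rightarrow> real) \<Rightarrow> nat \<Rightarrow> 'a list set \<Rightarrow> 'a \<Rightarrow> real" where
  "cfr_strat G q t I = rm (q t I) (iacts G I)"

definition cfr_plus :: "'a efg \<Rightarrow> (nat \<Rightarrow> 'a list set \<Rightarrow> 'a \<Rightarrow> real) \<Rightarrow> bool" where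
  "cfr_plus G q \<longleftrightarrow>
     (\<forall>I a. q 0 I a = 0) \<and>
     (\<forall>t. \<forall>I\<in>infosets G 1. \<forall>a\<in>iacts G I.
        q (Suc t) I a = max 0 (q t I a
          + cf_vec G 1 (cfr_strat G q t) (cfr_strat G q t) I a
          - (\<Sum>b\<in>iacts G I. cfr_strat G q t I b * cf_vec G 1 (cfr_strat G q t) (cfr_strat G q t) I b))) \<and>
     (\<forall>t. \<forall>I\<in>infosets G 2. \<forall>a\<in>iacts G I.
        q (Suc t) I a = max 0 (q t I a
          + cf_vec G 2 (cfr_strat G q (Suc t)) (cfr_strat G q t) I a
          - (\<Sum>b\<in>iacts G I. cfr_strat G q t I b * cf_vec G 2 (cfr_strat G q (Suc t)) (cfr_strat G q t) I b)))"

definition payoff_range :: "'a efg \<Rightarrow> real" where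
  "payoff_range G = Max {util G y - util G z | y z. y \<in> terminals G \<and> z \<in> terminals G}"

definition max_acts :: "'a efg \<Rightarrow> nat" where
  "max_acts G = Max {card (iacts G I) | I. I \<in> infosets G 1 \<union> infosets G 2}"

end

theory Submission
  imports Defs
begin

definition ext :: "'a efg \<Rightarrow> 'a list \<Rightarrow> 'a list set" where
  "ext G h = {z \<in> terminals G. \<exists>w. z = h @ w}"

definition nx :: "'a efg \<Rightarrow> 'a list \<Rightarrow> 'a list set" where
  "nx G h = {h'. nonterm G h' \<and> (\<exists>w. h' = h @ w)}"

definition pp :: "('a list \<Rightarrow> 'a \<Rightarrow> real) \<Rightarrow> 'a list \<Rightarrow> 'a list \<Rightarrow> real" where
  "pp \<omega> h z = (\<Prod>i\<in>{length h..<length z}. \<omega> (take i z) (z ! i))"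

lemma pp_self[simp]: "pp \<omega> h h = 1"
  by (simp add: pp_def)

lemma pp_step: "pp \<omega> h (h @ a # w) = \<omega> h a * pp \<omega> (h @ [a]) (h @ a # w)"
proof -
  have "pp \<omega> h (h @ a # w) = \<omega> (take (length h) (h @ a # w)) ((h @ a # w) ! length h) *
     (\<Prod>i\<in>{Suc (length h)..<length (h @ a # w)}. \<omega> (take i (h @ a # w)) ((h @ a # w) ! i))"
    unfolding pp_def by (rule prod.atLeast_Suc_lessThan) simp
  then show ?thesis by (simp add: pp_def)
qed

lemma pp_split: "pp \<omega> [] (h @ w) = pp \<omega> [] h * pp \<omega> h (h @ w)"
proof -
  let ?f = "\<lambda>i. \<omega> (take i (h @ w)) ((h @ w) ! i)"
  have "pp \<omega> [] (h @ w) = prod ?f {0..<length h} * prod ?f {length h..<length (h @ w)}"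
    unfolding pp_def by (subst prod.atLeastLessThan_concat) auto
  also have "prod ?f {0..<length h} = pp \<omega> [] h"
    unfolding pp_def by (rule prod.cong) (auto simp: nth_append)
  finally show ?thesis by (simp add: pp_def)
qed

lemma pp_mult: "pp \<omega>1 h z * pp \<omega>2 h z = pp (\<lambda>x a. \<omega>1 x a * \<omega>2 x a) h z"
  unfolding pp_def by (simp add: prod.distrib)

context fixes G :: "'a efg" assumes wf: "wf_game G"
begin

lemma fin_hist: "finite (hist G)" using wf by (simp add: wf_game_def)
lemma nil_hist: "[] \<in> hist G" using wf by (simp add: wf_game_def)
lemma take_hist: "h \<in> hist G \<Longrightarrow> take i h \<in> hist G" using wf by (simp add: wf_game_def)
lemma pref_hist: "h @ w \<in> hist G \<Longrightarrow> h \<in> hist G" using take_hist[of "h @ w" "length h"] by simp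

lemma fin_acts: "finite (acts G h)"
proof -
  have "acts G h \<subseteq> (\<lambda>z. z ! length h) ` hist G"
    unfolding acts_def by (force intro: image_eqI[where x="h @ [_]"])
  then show ?thesis using fin_hist finite_surj by blast
qed

lemma fin_ext: "finite (ext G h)"
  using fin_hist by (rule finite_subset[rotated]) (auto simp: ext_def terminals_def)

lemma fin_nx: "finite (nx G h)"
  using fin_hist by (rule finite_subset[rotated]) (auto simp: nx_def nonterm_def)

lemma fin_terminals: "finite (terminals G)"
  using fin_hist by (rule finite_subset[rotated]) (auto simp: terminals_def)

lemma ext_hist: "z \<in> ext G h \<Longrightarrow> h \<in> hist G"
  by (auto simp: ext_def terminals_def intro: pref_hist)

lemma step_acts: "h @ a # w \<in> hist G \<Longrightarrow> a \<in> acts G h"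
  using pref_hist[of "h @ [a]" w] by (simp add: acts_def)

lemma ext_term: "h \<in> terminals G \<Longrightarrow> ext G h = {h}"
proof -
  assume h: "h \<in> terminals G"
  { fix w assume "h @ w \<in> terminals G"
    have "w = []"
    proof (cases w)
      case (Cons b w')
      then have "b \<in> acts G h" using \<open>h @ w \<in> terminals G\<close> step_acts by (auto simp: terminals_def)
      then show ?thesis using h by (auto simp: terminals_def)
    qed }
  then show ?thesis using h by (auto simp: ext_def)
qed

lemma ext_nonterm: "nonterm G h \<Longrightarrow> ext G h = (\<Union>a\<in>acts G h. ext G (h @ [a]))"
proof -
  assume h: "nonterm G h"
  { fix w assume hw: "h @ w \<in> terminals G"
    have "\<exists>a\<in>acts G h. \<exists>w'. w = a # w'"
    proof (cases w)
      case Nil then show ?thesis using h hw by (auto simp: terminals_def nonterm_def)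
    next
      case (Cons b w')
      then show ?thesis using hw step_acts by (auto simp: terminals_def)
    qed }
  then show ?thesis by (auto simp: ext_def)
qed

lemma sum_ext_nonterm: "nonterm G h \<Longrightarrow> sum f (ext G h) = (\<Sum>a\<in>acts G h. sum f (ext G (h @ [a])))"
  apply (simp add: ext_nonterm)
  apply (rule sum.UNION_disjoint[OF fin_acts])
   apply (simp add: fin_ext)
  by (auto simp: ext_def)

lemma nx_term: "h \<in> terminals G \<Longrightarrow> nx G h = {}"
proof -
  assume h: "h \<in> terminals G"
  { fix w assume "nonterm G (h @ w)"
    then have False
    proof (cases w)
      case Nil then show ?thesis using h \<open>nonterm G (h @ w)\<close> by (auto simp: terminals_def nonterm_def)
    next
      case (Cons b w')
      then have "b \<in> acts G h" using \<open>nonterm G (h @ w)\<close> step_acts by (auto simp: nonterm_def)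
      then show ?thesis using h by (auto simp: terminals_def)
    qed }
  then show ?thesis by (auto simp: nx_def)
qed

lemma nx_nonterm: "nonterm G h \<Longrightarrow> nx G h = insert h (\<Union>a\<in>acts G h. nx G (h @ [a]))"
proof -
  assume h: "nonterm G h"
  { fix w assume hw: "nonterm G (h @ w)" "w \<noteq> []"
    then obtain b w' where "w = b # w'" by (cases w) auto
    then have "\<exists>a\<in>acts G h. \<exists>w'. w = a # w'" using hw step_acts by (auto simp: nonterm_def) }
  then show ?thesis using h by (auto simp: nx_def)
qed

lemma sum_nx_nonterm: "nonterm G h \<Longrightarrow> sum f (nx G h) = f h + (\<Sum>a\<in>acts G h. sum f (nx G (h @ [a])))"
  apply (simp add: nx_nonterm)
  apply (subst sum.insert)
    apply (simp add: fin_nx fin_acts)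
   apply (auto simp: nx_def)[1]
  apply (subst sum.UNION_disjoint[OF fin_acts])
    apply (simp add: fin_nx)
  by (auto simp: nx_def)

lemma hist_induct[consumes 1, case_names trm ntm]:
  assumes "h \<in> hist G"
    and T: "\<And>h. h \<in> terminals G \<Longrightarrow> P h"
    and N: "\<And>h. nonterm G h \<Longrightarrow> (\<And>a. a \<in> acts G h \<Longrightarrow> P (h @ [a])) \<Longrightarrow> P h"
  shows "P h"
proof -
  define M where "M = Max (length ` hist G)"
  have "\<And>h. h \<in> hist G \<Longrightarrow> M - length h = n \<Longrightarrow> P h" for n
  proof (induction n rule: less_induct)
    case (less n h)
    show ?case
    proof (cases "acts G h = {}")
      case True then show ?thesis using less T by (auto simp: terminals_def)
    next
      case False
      then have nt: "nonterm G h" using less by (auto simp: nonterm_def)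
      show ?thesis
      proof (rule N[OF nt])
        fix a assume a: "a \<in> acts G h"
        then have ha: "h @ [a] \<in> hist G" by (simp add: acts_def)
        then have "length (h @ [a]) \<le> M" unfolding M_def by (intro Max_ge) (auto simp: fin_hist intro!: image_eqI[where x="h @ [a]"])
        then have "M - length (h @ [a]) < n" using less.prems by simp
        then show "P (h @ [a])" using less.IH ha by blast
      qed
    qed
  qed
  then show ?thesis using assms(1) by blast
qed

lemma pp_nonneg:
  assumes "z \<in> hist G" and "\<And>h' a. nonterm G h' \<Longrightarrow> a \<in> acts G h' \<Longrightarrow> 0 \<le> \<omega> h' a"
  shows "0 \<le> pp \<omega> h z"
  unfolding pp_def
proof (rule prod_nonneg)
  fix i assume "i \<in> {length h..<length z}"
  then have i: "i < length z" by simp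
  have "take (Suc i) z \<in> hist G" using assms(1) take_hist by blast
  then have "take i z @ [z ! i] \<in> hist G" using i by (simp add: take_Suc_conv_app_nth)
  then show "0 \<le> \<omega> (take i z) (z ! i)"
    by (intro assms(2)) (auto simp: nonterm_def acts_def intro: pref_hist)
qed

lemma pp_le1:
  assumes "z \<in> hist G" and "\<And>h' a. nonterm G h' \<Longrightarrow> a \<in> acts G h' \<Longrightarrow> 0 \<le> \<omega> h' a \<and> \<omega> h' a \<le> 1"
  shows "pp \<omega> h z \<le> 1"
  unfolding pp_def
proof (rule prod_le_1)
  fix i assume "i \<in> {length h..<length z}"
  then have i: "i < length z" by simp
  have "take (Suc i) z \<in> hist G" using assms(1) take_hist by blast
  then have "take i z @ [z ! i] \<in> hist G" using i by (simp add: take_Suc_conv_app_nth)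
  then show "0 \<le> \<omega> (take i z) (z ! i) \<and> \<omega> (take i z) (z ! i) \<le> 1"
    by (intro assms(2)) (auto simp: nonterm_def acts_def intro: pref_hist)
qed

lemma sum_pp_one:
  assumes "h \<in> hist G" and D: "\<And>h'. nonterm G h' \<Longrightarrow> sum (\<omega> h') (acts G h') = 1"
  shows "sum (pp \<omega> h) (ext G h) = 1"
  using assms(1)
proof (induction h rule: hist_induct)
  case (trm h) then show ?case by (simp add: ext_term)
next
  case (ntm h)
  have "sum (pp \<omega> h) (ext G h) = (\<Sum>a\<in>acts G h. \<omega> h a * sum (pp \<omega> (h @ [a])) (ext G (h @ [a])))"
    unfolding sum_ext_nonterm[OF ntm(1)] sum_distrib_left
    by (intro sum.cong refl) (auto simp: ext_def pp_step)
  also have "\<dots> = 1" using ntm D by simp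
  finally show ?case .
qed

lemma telescope:
  assumes "h \<in> hist G"
  shows "(\<Sum>z\<in>ext G h. pp \<omega> h z * g z) - g h =
         (\<Sum>h'\<in>nx G h. pp \<omega> h h' * ((\<Sum>a\<in>acts G h'. \<omega> h' a * g (h' @ [a])) - g h'))"
  using assms
proof (induction h rule: hist_induct)
  case (trm h) then show ?case by (simp add: ext_term nx_term)
next
  case (ntm h)
  let ?F = "\<lambda>h'. ((\<Sum>a\<in>acts G h'. \<omega> h' a * g (h' @ [a])) - g h')"
  have e: "(\<Sum>z\<in>ext G h. pp \<omega> h z * g z) = (\<Sum>a\<in>acts G h. \<omega> h a * (\<Sum>z\<in>ext G (h @ [a]). pp \<omega> (h @ [a]) z * g z))"
    unfolding sum_ext_nonterm[OF ntm(1)] sum_distrib_left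
    by (intro sum.cong refl) (auto simp: ext_def pp_step)
  have n: "(\<Sum>h'\<in>nx G h. pp \<omega> h h' * ?F h') = ?F h + (\<Sum>a\<in>acts G h. \<omega> h a * (\<Sum>h'\<in>nx G (h @ [a]). pp \<omega> (h @ [a]) h' * ?F h'))"
    unfolding sum_nx_nonterm[OF ntm(1)] sum_distrib_left
    by (intro arg_cong2[where f="(+)"] sum.cong refl) (auto simp: nx_def pp_step)
  have "(\<Sum>a\<in>acts G h. \<omega> h a * (\<Sum>z\<in>ext G (h @ [a]). pp \<omega> (h @ [a]) z * g z)) =
        (\<Sum>a\<in>acts G h. \<omega> h a * g (h @ [a]) + \<omega> h a * (\<Sum>h'\<in>nx G (h @ [a]). pp \<omega> (h @ [a]) h' * ?F h'))"
  proof (rule sum.cong[OF refl])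
    fix a assume a: "a \<in> acts G h"
    have "(\<Sum>z\<in>ext G (h @ [a]). pp \<omega> (h @ [a]) z * g z) = g (h @ [a]) + (\<Sum>h'\<in>nx G (h @ [a]). pp \<omega> (h @ [a]) h' * ?F h')"
      using ntm(2)[OF a] by linarith
    then show "\<omega> h a * (\<Sum>z\<in>ext G (h @ [a]). pp \<omega> (h @ [a]) z * g z) = \<omega> h a * g (h @ [a]) + \<omega> h a * (\<Sum>h'\<in>nx G (h @ [a]). pp \<omega> (h @ [a]) h' * ?F h')"
      by (simp add: algebra_simps)
  qed
  then show ?case unfolding e n by (simp add: sum.distrib)
qed

end

definition chi :: "'a efg \<Rightarrow> 'a list \<Rightarrow> 'a \<Rightarrow> real" where
  "chi G h a = (if plr G h = 0 then chn G h a else 1)"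

definition ow :: "'a efg \<Rightarrow> nat \<Rightarrow> ('a list set \<Rightarrow> 'a \<Rightarrow> real) \<Rightarrow> 'a list \<Rightarrow> 'a \<Rightarrow> real" where
  "ow G p s h a = (if plr G h = p then s (iset G h) a else 1)"

definition fullstrat :: "'a efg \<Rightarrow> nat \<Rightarrow> ('a list set \<Rightarrow> 'a \<Rightarrow> real) \<Rightarrow> bool" where
  "fullstrat G p s \<longleftrightarrow> (\<forall>h. nonterm G h \<and> plr G h = p \<longrightarrow>
      (\<forall>a\<in>acts G h. 0 \<le> s (iset G h) a) \<and> sum (s (iset G h)) (acts G h) = 1)"

definition sg :: "nat \<Rightarrow> real" where "sg p = (if p = 1 then 1 else -1)"

definition cfv :: "'a efg \<Rightarrow> nat \<Rightarrow> ('a list set \<Rightarrow> 'a \<Rightarrow> real) \<Rightarrow> ('a list set \<Rightarrow> 'a \<Rightarrow> real) \<Rightarrow> 'a list \<Rightarrow> real" where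
  "cfv G p own oth h = (\<Sum>z\<in>ext G h. chance_reach G z * reach G (3 - p) oth z * cond_reach G p own h z * (sg p * util G z))"

definition cvec :: "'a efg \<Rightarrow> nat \<Rightarrow> ('a list set \<Rightarrow> 'a \<Rightarrow> real) \<Rightarrow> ('a list set \<Rightarrow> 'a \<Rightarrow> real) \<Rightarrow> 'a list set \<Rightarrow> 'a \<Rightarrow> real" where
  "cvec G p own oth I a = (\<Sum>h\<in>I. cfv G p own oth (h @ [a]))"

definition rep :: "'a list set \<Rightarrow> 'a list" where "rep I = (SOME h. h \<in> I)"

lemma cond_pp: "cond_reach G p s h z = pp (ow G p s) h z"
proof -
  have "pp (ow G p s) h z = (\<Prod>i\<in>{i\<in>{length h..<length z}. plr G (take i z) = p}. s (iset G (take i z)) (z ! i))"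
    unfolding pp_def ow_def by (subst prod.inter_filter) auto
  also have "{i\<in>{length h..<length z}. plr G (take i z) = p} = {i. length h \<le> i \<and> i < length z \<and> plr G (take i z) = p}"
    by auto
  finally show ?thesis by (simp add: cond_reach_def)
qed

lemma reach_pp: "reach G p s z = pp (ow G p s) [] z"
  unfolding cond_pp[symmetric] by (simp add: cond_reach_def reach_def)

lemma chance_pp: "chance_reach G z = pp (chi G) [] z"
proof -
  have "pp (chi G) [] z = (\<Prod>i\<in>{i\<in>{0..<length z}. plr G (take i z) = 0}. chn G (take i z) (z ! i))"
    unfolding pp_def chi_def by (subst prod.inter_filter) auto
  also have "{i\<in>{0..<length z}. plr G (take i z) = 0} = {i. i < length z \<and> plr G (take i z) = 0}"
    by auto
  finally show ?thesis by (simp add: chance_reach_def)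
qed

lemma concat_if_map: "concat (map (\<lambda>i. if P i then [f i] else []) xs) = map f (filter P xs)"
  by (induction xs) auto

lemma reach_own_seq: "reach G p s h = prod_list (map (\<lambda>(J, a). s J a) (own_seq G p h))"
proof -
  have "own_seq G p h = map (\<lambda>i. (iset G (take i h), h ! i)) (filter (\<lambda>i. plr G (take i h) = p) [0..<length h])"
    unfolding own_seq_def by (simp add: concat_if_map)
  then have "prod_list (map (\<lambda>(J, a). s J a) (own_seq G p h)) =
     prod_list (map (\<lambda>i. s (iset G (take i h)) (h ! i)) (filter (\<lambda>i. plr G (take i h) = p) [0..<length h]))"
    by (simp add: case_prod_beta comp_def)
  also have "\<dots> = (\<Prod>i\<in>set (filter (\<lambda>i. plr G (take i h) = p) [0..<length h]). s (iset G (take i h)) (h ! i))"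
    by (rule prod.distinct_set_conv_list[symmetric]) (rule distinct_filter, rule distinct_upt)
  also have "set (filter (\<lambda>i. plr G (take i h) = p) [0..<length h]) = {i. i < length h \<and> plr G (take i h) = p}"
    by auto
  finally show ?thesis by (simp add: reach_def)
qed

lemma cf_value_cfv1: "cf_value G 1 s1 s2 h = cfv G 1 s1 s2 h"
  by (simp add: cf_value_def cfv_def ext_def sg_def)

lemma cf_value_cfv2: "cf_value G 2 s1 s2 h = cfv G 2 s2 s1 h"
  by (simp add: cf_value_def cfv_def ext_def sg_def)

lemma cf_vec_cvec1: "cf_vec G 1 s1 s2 I a = cvec G 1 s1 s2 I a"
  unfolding cf_vec_def cvec_def cf_value_cfv1 ..

lemma cf_vec_cvec2: "cf_vec G 2 s1 s2 I a = cvec G 2 s2 s1 I a"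
  unfolding cf_vec_def cvec_def cf_value_cfv2 ..

context fixes G :: "'a efg" assumes wf: "wf_game G"
begin

lemma plr_cases: "nonterm G h \<Longrightarrow> plr G h = 0 \<or> plr G h = 1 \<or> plr G h = 2"
proof -
  have "\<forall>h. nonterm G h \<longrightarrow> plr G h \<in> {0, 1, 2}" using wf unfolding wf_game_def by blast
  then show "nonterm G h \<Longrightarrow> plr G h = 0 \<or> plr G h = 1 \<or> plr G h = 2" by blast
qed

lemma chn_dist: "nonterm G h \<Longrightarrow> plr G h = 0 \<Longrightarrow> (\<forall>a\<in>acts G h. 0 \<le> chn G h a) \<and> sum (chn G h) (acts G h) = 1"
proof -
  have "\<forall>h. nonterm G h \<and> plr G h = 0 \<longrightarrow>
        (\<forall>a\<in>acts G h. 0 \<le> chn G h a) \<and> sum (chn G h) (acts G h) = 1" using wf unfolding wf_game_def by blast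
  then show "nonterm G h \<Longrightarrow> plr G h = 0 \<Longrightarrow> (\<forall>a\<in>acts G h. 0 \<le> chn G h a) \<and> sum (chn G h) (acts G h) = 1" by blast
qed

lemma iset_props:
  assumes "nonterm G h" "plr G h \<in> {1, 2}"
  shows "h \<in> iset G h" "\<And>h'. h' \<in> iset G h \<Longrightarrow> nonterm G h' \<and> plr G h' = plr G h \<and> iset G h' = iset G h \<and> acts G h' = acts G h"
proof -
  have "\<forall>h. nonterm G h \<and> plr G h \<in> {1, 2} \<longrightarrow>
        h \<in> iset G h \<and>
        (\<forall>h'\<in>iset G h. nonterm G h' \<and> plr G h' = plr G h \<and>
                        iset G h' = iset G h \<and> acts G h' = acts G h)" using wf unfolding wf_game_def by blast
  then show "h \<in> iset G h" "\<And>h'. h' \<in> iset G h \<Longrightarrow> nonterm G h' \<and> plr G h' = plr G h \<and> iset G h' = iset G h \<and> acts G h' = acts G h"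
    using assms by blast+
qed

lemma perfect_recall:
  assumes "nonterm G h" "plr G h \<in> {1, 2}" "h' \<in> iset G h"
  shows "own_seq G (plr G h) h = own_seq G (plr G h) h'"
  using wf assms unfolding wf_game_def by blast

lemma iacts_iset: "nonterm G h \<Longrightarrow> plr G h \<in> {1, 2} \<Longrightarrow> iacts G (iset G h) = acts G h"
proof -
  assume a: "nonterm G h" "plr G h \<in> {1, 2}"
  have "\<forall>h'\<in>iset G h. acts G h' = acts G h" using iset_props(2)[OF a] by blast
  moreover have "h \<in> iset G h" using iset_props(1)[OF a] .
  ultimately show ?thesis unfolding iacts_def by blast
qed

lemma reach_iset: "nonterm G h \<Longrightarrow> plr G h = p \<Longrightarrow> p \<in> {1, 2} \<Longrightarrow> h' \<in> iset G h \<Longrightarrow> reach G p s h' = reach G p s h"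
proof -
  assume a: "nonterm G h" "plr G h = p" "p \<in> {1, 2}" "h' \<in> iset G h"
  then have "own_seq G (plr G h) h = own_seq G (plr G h) h'" using perfect_recall[of h h'] by simp
  then have "own_seq G p h = own_seq G p h'" using a(2) by simp
  then show ?thesis by (simp add: reach_own_seq)
qed

lemma strategy_full: "p \<in> {1, 2} \<Longrightarrow> strategy G p s \<Longrightarrow> fullstrat G p s"
  unfolding strategy_def fullstrat_def infosets_def
  by (auto simp: iacts_iset)

lemma full_le1: "fullstrat G p s \<Longrightarrow> nonterm G h \<Longrightarrow> plr G h = p \<Longrightarrow> a \<in> acts G h \<Longrightarrow> s (iset G h) a \<le> 1"
proof -
  assume fs: "fullstrat G p s" and h: "nonterm G h" "plr G h = p" and a: "a \<in> acts G h"
  have d: "(\<forall>a\<in>acts G h. 0 \<le> s (iset G h) a) \<and> sum (s (iset G h)) (acts G h) = 1"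
    using fs h unfolding fullstrat_def by blast
  have "s (iset G h) a \<le> sum (s (iset G h)) (acts G h)"
    by (rule member_le_sum[OF a]) (use d fin_acts[OF wf] in auto)
  with d show ?thesis by simp
qed

lemma cfv_term: "z \<in> terminals G \<Longrightarrow> cfv G p own oth z = chance_reach G z * reach G (3 - p) oth z * (sg p * util G z)"
  by (simp add: cfv_def ext_term[OF wf] cond_pp)

lemma cfv_nonterm: "nonterm G h \<Longrightarrow> cfv G p own oth h = (\<Sum>a\<in>acts G h. ow G p own h a * cfv G p own oth (h @ [a]))"
  unfolding cfv_def sum_ext_nonterm[OF wf] sum_distrib_left
  by (intro sum.cong refl) (auto simp: ext_def cond_pp pp_step)

lemma ext_nil: "ext G [] = terminals G"
  by (auto simp: ext_def)

lemma nx_nil: "nx G [] = {h. nonterm G h}"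
  by (auto simp: nx_def)

lemma cfv_nil: "cfv G p own oth [] = (\<Sum>z\<in>terminals G. chance_reach G z * reach G (3 - p) oth z * reach G p own z * (sg p * util G z))"
  by (simp add: cfv_def ext_nil cond_pp reach_pp)

lemma perf_diff:
  "cfv G p s oth [] - cfv G p \<sigma> oth [] =
   (\<Sum>h\<in>{h. nonterm G h \<and> plr G h = p}. reach G p s h * (\<Sum>a\<in>acts G h. (s (iset G h) a - \<sigma> (iset G h) a) * cfv G p \<sigma> oth (h @ [a])))"
proof -
  have T: "(\<Sum>z\<in>ext G []. pp (ow G p s) [] z * cfv G p \<sigma> oth z) - cfv G p \<sigma> oth [] =
         (\<Sum>h'\<in>nx G []. pp (ow G p s) [] h' * ((\<Sum>a\<in>acts G h'. ow G p s h' a * cfv G p \<sigma> oth (h' @ [a])) - cfv G p \<sigma> oth h'))"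
    by (rule telescope[OF wf nil_hist[OF wf]])
  have 1: "(\<Sum>z\<in>ext G []. pp (ow G p s) [] z * cfv G p \<sigma> oth z) = cfv G p s oth []"
    unfolding cfv_nil ext_nil
    by (intro sum.cong refl) (simp add: cfv_term reach_pp)
  have 2: "(\<Sum>h'\<in>nx G []. pp (ow G p s) [] h' * ((\<Sum>a\<in>acts G h'. ow G p s h' a * cfv G p \<sigma> oth (h' @ [a])) - cfv G p \<sigma> oth h'))
     = (\<Sum>h\<in>nx G []. if plr G h = p then reach G p s h * (\<Sum>a\<in>acts G h. (s (iset G h) a - \<sigma> (iset G h) a) * cfv G p \<sigma> oth (h @ [a])) else 0)"
  proof (rule sum.cong[OF refl])
    fix h assume "h \<in> nx G []"
    then have nt: "nonterm G h" by (simp add: nx_nil)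
    show "pp (ow G p s) [] h * ((\<Sum>a\<in>acts G h. ow G p s h a * cfv G p \<sigma> oth (h @ [a])) - cfv G p \<sigma> oth h) =
      (if plr G h = p then reach G p s h * (\<Sum>a\<in>acts G h. (s (iset G h) a - \<sigma> (iset G h) a) * cfv G p \<sigma> oth (h @ [a])) else 0)"
    proof (cases "plr G h = p")
      case True
      have "cfv G p \<sigma> oth h = (\<Sum>a\<in>acts G h. \<sigma> (iset G h) a * cfv G p \<sigma> oth (h @ [a]))"
        using cfv_nonterm[OF nt] True by (simp add: ow_def)
      then show ?thesis using True by (simp add: ow_def reach_pp sum_subtractf left_diff_distrib)
    next
      case False
      have "cfv G p \<sigma> oth h = (\<Sum>a\<in>acts G h. cfv G p \<sigma> oth (h @ [a]))"
        using cfv_nonterm[OF nt] False by (simp add: ow_def)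
      then show ?thesis using False by (simp add: ow_def)
    qed
  qed
  have 3: "\<dots> = (\<Sum>h\<in>{h. nonterm G h \<and> plr G h = p}. reach G p s h * (\<Sum>a\<in>acts G h. (s (iset G h) a - \<sigma> (iset G h) a) * cfv G p \<sigma> oth (h @ [a])))"
  proof -
    have "(\<Sum>h\<in>nx G []. if plr G h = p then reach G p s h * (\<Sum>a\<in>acts G h. (s (iset G h) a - \<sigma> (iset G h) a) * cfv G p \<sigma> oth (h @ [a])) else 0)
      = (\<Sum>h\<in>{x\<in>nx G []. plr G x = p}. reach G p s h * (\<Sum>a\<in>acts G h. (s (iset G h) a - \<sigma> (iset G h) a) * cfv G p \<sigma> oth (h @ [a])))"
      by (rule sum.inter_filter[symmetric, OF fin_nx[OF wf]])
    also have "{x\<in>nx G []. plr G x = p} = {h. nonterm G h \<and> plr G h = p}" by (auto simp: nx_nil)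
    finally show ?thesis .
  qed
  show ?thesis using T 1 2 3 by simp
qed

lemma infosets_img: "infosets G p = iset G ` {h. nonterm G h \<and> plr G h = p}"
  unfolding infosets_def by auto

lemma group_infosets:
  assumes p: "p \<in> {1, 2}"
  shows "(\<Sum>h\<in>{h. nonterm G h \<and> plr G h = p}. F (iset G h) h) = (\<Sum>I\<in>infosets G p. \<Sum>h\<in>I. F I h)"
proof -
  let ?S = "{h. nonterm G h \<and> plr G h = p}"
  have fin: "finite ?S" using fin_hist[OF wf] by (rule finite_subset[rotated]) (auto simp: nonterm_def)
  have "(\<Sum>h\<in>?S. F (iset G h) h) = (\<Sum>I\<in>iset G ` ?S. \<Sum>h\<in>{x \<in> ?S. iset G x = I}. F (iset G h) h)"
    by (rule sum.image_gen[OF fin])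
  also have "\<dots> = (\<Sum>I\<in>infosets G p. \<Sum>h\<in>I. F I h)"
    unfolding infosets_img
  proof (rule sum.cong[OF refl])
    fix I assume "I \<in> iset G ` ?S"
    then obtain h0 where h0: "nonterm G h0" "plr G h0 = p" "I = iset G h0" by auto
    have "{x \<in> ?S. iset G x = I} = I"
    proof
      show "{x \<in> ?S. iset G x = I} \<subseteq> I"
      proof
        fix x assume "x \<in> {x \<in> ?S. iset G x = I}"
        then show "x \<in> I" using iset_props(1)[of x] p by auto
      qed
      show "I \<subseteq> {x \<in> ?S. iset G x = I}"
        using iset_props(2)[of h0] h0 p by auto
    qed
    then show "(\<Sum>h\<in>{x \<in> ?S. iset G x = I}. F (iset G h) h) = (\<Sum>h\<in>I. F I h)"
      by (intro sum.cong) auto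
  qed
  finally show ?thesis .
qed

lemma rep_props:
  assumes p: "p \<in> {1, 2}" and I: "I \<in> infosets G p"
  shows "rep I \<in> I" "\<And>h. h \<in> I \<Longrightarrow> reach G p s h = reach G p s (rep I)"
    "\<And>h. h \<in> I \<Longrightarrow> nonterm G h \<and> plr G h = p \<and> iset G h = I \<and> acts G h = iacts G I"
proof -
  obtain h0 where h0: "nonterm G h0" "plr G h0 = p" "I = iset G h0" using I by (auto simp: infosets_def)
  have pin: "plr G h0 \<in> {1, 2}" using h0 p by simp
  have P: "\<And>h. h \<in> I \<Longrightarrow> nonterm G h \<and> plr G h = plr G h0 \<and> iset G h = iset G h0 \<and> acts G h = acts G h0"
    using iset_props(2)[OF h0(1) pin] h0(3) by blast
  have ia: "iacts G I = acts G h0" using iacts_iset[OF h0(1) pin] h0(3) by simp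
  have "h0 \<in> I" using iset_props(1)[OF h0(1) pin] h0(3) by simp
  then show r: "rep I \<in> I" unfolding rep_def by (rule someI)
  have R: "\<And>h. h \<in> I \<Longrightarrow> reach G p s h = reach G p s h0"
    using reach_iset[OF h0(1) h0(2) p] h0(3) by blast
  show "\<And>h. h \<in> I \<Longrightarrow> reach G p s h = reach G p s (rep I)"
    using R[OF r] R by simp
  show "\<And>h. h \<in> I \<Longrightarrow> nonterm G h \<and> plr G h = p \<and> iset G h = I \<and> acts G h = iacts G I"
    using P ia h0(2,3) by simp
qed

lemma fin_infosets: "finite (infosets G p)"
proof -
  have "finite {h. nonterm G h \<and> plr G h = p}" using fin_hist[OF wf] by (rule finite_subset[rotated]) (auto simp: nonterm_def)
  then show ?thesis unfolding infosets_img by simp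
qed

lemma fin_infoset: "p \<in> {1, 2} \<Longrightarrow> I \<in> infosets G p \<Longrightarrow> finite I"
proof -
  assume a: "p \<in> {1, 2}" "I \<in> infosets G p"
  have "I \<subseteq> hist G" using rep_props(3)[OF a] by (auto simp: nonterm_def)
  then show ?thesis using fin_hist[OF wf] finite_subset by blast
qed

lemma perf_diff_grouped:
  assumes p: "p \<in> {1, 2}"
  shows "cfv G p s oth [] - cfv G p \<sigma> oth [] =
   (\<Sum>I\<in>infosets G p. reach G p s (rep I) * (\<Sum>a\<in>iacts G I. (s I a - \<sigma> I a) * cvec G p \<sigma> oth I a))"
proof -
  have "cfv G p s oth [] - cfv G p \<sigma> oth [] =
    (\<Sum>I\<in>infosets G p. \<Sum>h\<in>I. reach G p s h * (\<Sum>a\<in>acts G h. (s I a - \<sigma> I a) * cfv G p \<sigma> oth (h @ [a])))"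
    unfolding perf_diff by (rule group_infosets[OF p])
  also have "\<dots> = (\<Sum>I\<in>infosets G p. reach G p s (rep I) * (\<Sum>a\<in>iacts G I. (s I a - \<sigma> I a) * cvec G p \<sigma> oth I a))"
  proof (rule sum.cong[OF refl])
    fix I assume I: "I \<in> infosets G p"
    have "(\<Sum>h\<in>I. reach G p s h * (\<Sum>a\<in>acts G h. (s I a - \<sigma> I a) * cfv G p \<sigma> oth (h @ [a]))) =
          (\<Sum>h\<in>I. reach G p s (rep I) * (\<Sum>a\<in>iacts G I. (s I a - \<sigma> I a) * cfv G p \<sigma> oth (h @ [a])))"
    proof (rule sum.cong[OF refl])
      fix h assume h: "h \<in> I"
      have "reach G p s h = reach G p s (rep I)" "acts G h = iacts G I" using rep_props(2,3)[OF p I h] by auto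
      then show "reach G p s h * (\<Sum>a\<in>acts G h. (s I a - \<sigma> I a) * cfv G p \<sigma> oth (h @ [a])) =
         reach G p s (rep I) * (\<Sum>a\<in>iacts G I. (s I a - \<sigma> I a) * cfv G p \<sigma> oth (h @ [a]))" by simp
    qed
    also have "\<dots> = reach G p s (rep I) * (\<Sum>h\<in>I. \<Sum>a\<in>iacts G I. (s I a - \<sigma> I a) * cfv G p \<sigma> oth (h @ [a]))"
      by (rule sum_distrib_left[symmetric])
    also have "(\<Sum>h\<in>I. \<Sum>a\<in>iacts G I. (s I a - \<sigma> I a) * cfv G p \<sigma> oth (h @ [a])) = (\<Sum>a\<in>iacts G I. \<Sum>h\<in>I. (s I a - \<sigma> I a) * cfv G p \<sigma> oth (h @ [a]))"
      by (rule sum.swap)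
    also have "\<dots> = (\<Sum>a\<in>iacts G I. (s I a - \<sigma> I a) * cvec G p \<sigma> oth I a)"
      unfolding cvec_def by (simp add: sum_distrib_left)
    finally show "(\<Sum>h\<in>I. reach G p s h * (\<Sum>a\<in>acts G h. (s I a - \<sigma> I a) * cfv G p \<sigma> oth (h @ [a]))) =
       reach G p s (rep I) * (\<Sum>a\<in>iacts G I. (s I a - \<sigma> I a) * cvec G p \<sigma> oth I a)" .
  qed
  finally show ?thesis .
qed

end

lemma rm_dist:
  assumes fin: "finite A" and ne: "A \<noteq> {}"
  shows "(\<forall>a\<in>A. 0 \<le> rm x A a) \<and> sum (rm x A) A = 1"
proof (cases "\<exists>b\<in>A. 0 < x b")
  case True
  then obtain b where b: "b \<in> A" "0 < x b" by auto
  have "max (x b) 0 \<le> (\<Sum>c\<in>A. max (x c) 0)"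
    by (rule member_le_sum[OF b(1)]) (auto simp: fin)
  then have S: "0 < (\<Sum>c\<in>A. max (x c) 0)" using b by linarith
  have "sum (rm x A) A = (\<Sum>a\<in>A. max (x a) 0 / (\<Sum>c\<in>A. max (x c) 0))"
    unfolding rm_def using True by simp
  also have "\<dots> = (\<Sum>a\<in>A. max (x a) 0) / (\<Sum>c\<in>A. max (x c) 0)"
    by (rule sum_divide_distrib[symmetric])
  finally have "sum (rm x A) A = (\<Sum>a\<in>A. max (x a) 0) / (\<Sum>c\<in>A. max (x c) 0)" .
  then show ?thesis using S True by (auto simp: rm_def)
next
  case False
  then show ?thesis using fin ne by (auto simp: rm_def)
qed

lemma rm_inner:
  assumes fin: "finite A" and nn: "\<forall>a\<in>A. 0 \<le> x a"
  shows "(\<Sum>a\<in>A. x a) * (\<Sum>a\<in>A. rm x A a * v a) = (\<Sum>a\<in>A. x a * v a)"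
proof (cases "\<exists>b\<in>A. 0 < x b")
  case True
  then obtain b where b: "b \<in> A" "0 < x b" by auto
  have "x b \<le> (\<Sum>c\<in>A. x c)"
    by (rule member_le_sum[OF b(1)]) (auto simp: fin nn)
  then have S: "0 < (\<Sum>c\<in>A. x c)" using b by linarith
  have m: "\<And>a. a \<in> A \<Longrightarrow> max (x a) 0 = x a" using nn by auto
  have "(\<Sum>a\<in>A. rm x A a * v a) = (\<Sum>a\<in>A. x a * v a / (\<Sum>c\<in>A. x c))"
    unfolding rm_def using True m by (intro sum.cong refl) (simp add: sum.cong[OF refl m])
  also have "\<dots> = (\<Sum>a\<in>A. x a * v a) / (\<Sum>c\<in>A. x c)" by (simp add: sum_divide_distrib)
  finally show ?thesis using S by simp
next
  case False
  then have "\<forall>a\<in>A. x a = 0" using nn by force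
  then show ?thesis by simp
qed

lemma rmplus:
  fixes A :: "'a set" and q v :: "nat \<Rightarrow> 'a \<Rightarrow> real" and L :: real
  assumes fin: "finite A" and ne: "A \<noteq> {}"
    and q0: "\<forall>a\<in>A. q 0 a = 0"
    and qs: "\<forall>n. \<forall>a\<in>A. q (Suc n) a = max 0 (q n a + v n a - (\<Sum>b\<in>A. rm (q n) A b * v n b))"
    and bnd: "\<forall>n. \<forall>a\<in>A. \<bar>v n a - (\<Sum>b\<in>A. rm (q n) A b * v n b)\<bar> \<le> L"
  shows "\<forall>a\<in>A. (\<Sum>n<N. real (n + 1) * (v n a - (\<Sum>b\<in>A. rm (q n) A b * v n b))) \<le> real N * (L * sqrt (real (card A) * real N))"
    and "(\<Sum>a\<in>A. rm (q (Suc n)) A a * (v n a - (\<Sum>b\<in>A. rm (q n) A b * v n b))) \<ge> 0"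
proof -
  define r where "r n a = v n a - (\<Sum>b\<in>A. rm (q n) A b * v n b)" for n a
  have qs': "\<And>n a. a \<in> A \<Longrightarrow> q (Suc n) a = max 0 (q n a + r n a)"
    using qs by (simp add: r_def)
  have bnd': "\<And>n a. a \<in> A \<Longrightarrow> \<bar>r n a\<bar> \<le> L" using bnd by (simp add: r_def)
  have L0: "0 \<le> L" using bnd'[of _ 0] ne by force
  have qnn: "\<And>n a. a \<in> A \<Longrightarrow> 0 \<le> q n a"
  proof -
    fix n a assume a: "a \<in> A"
    show "0 \<le> q n a" by (cases n) (auto simp: q0 qs' a)
  qed
  have ortho: "(\<Sum>a\<in>A. q n a * r n a) = 0" for n
  proof -
    define C where "C = (\<Sum>b\<in>A. rm (q n) A b * v n b)"
    have "(\<Sum>a\<in>A. q n a * r n a) = (\<Sum>a\<in>A. q n a * v n a - q n a * C)"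
      unfolding r_def C_def by (simp add: right_diff_distrib)
    also have "\<dots> = (\<Sum>a\<in>A. q n a * v n a) - (\<Sum>a\<in>A. q n a) * C"
      by (simp add: sum_subtractf sum_distrib_right)
    finally have "(\<Sum>a\<in>A. q n a * r n a) = (\<Sum>a\<in>A. q n a * v n a) - (\<Sum>a\<in>A. q n a) * (\<Sum>b\<in>A. rm (q n) A b * v n b)"
      unfolding C_def .
    then show ?thesis using rm_inner[OF fin, of "q n" "v n"] qnn by simp
  qed
  have sq: "(\<Sum>a\<in>A. (q n a)\<^sup>2) \<le> (\<Sum>m<n. \<Sum>a\<in>A. (r m a)\<^sup>2)" for n
  proof (induction n)
    case 0 then show ?case by (simp add: q0)
  next
    case (Suc n)
    have "(\<Sum>a\<in>A. (q (Suc n) a)\<^sup>2) \<le> (\<Sum>a\<in>A. (q n a + r n a)\<^sup>2)"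
    proof (rule sum_mono)
      fix a assume a: "a \<in> A"
      show "(q (Suc n) a)\<^sup>2 \<le> (q n a + r n a)\<^sup>2"
        unfolding qs'[OF a] by (cases "0 \<le> q n a + r n a") (auto simp: max_def)
    qed
    also have "\<dots> = (\<Sum>a\<in>A. (q n a)\<^sup>2) + 2 * (\<Sum>a\<in>A. q n a * r n a) + (\<Sum>a\<in>A. (r n a)\<^sup>2)"
      by (simp add: power2_sum sum.distrib sum_distrib_left algebra_simps)
    also have "\<dots> \<le> (\<Sum>m<Suc n. \<Sum>a\<in>A. (r m a)\<^sup>2)"
      using Suc ortho[of n] by simp
    finally show ?case .
  qed
  have rsq: "(\<Sum>a\<in>A. (r m a)\<^sup>2) \<le> real (card A) * L\<^sup>2" for m
  proof -
    have "(\<Sum>a\<in>A. (r m a)\<^sup>2) \<le> (\<Sum>a\<in>A. L\<^sup>2)"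
    proof (rule sum_mono)
      fix a assume "a \<in> A"
      then have "\<bar>r m a\<bar> \<le> L" by (rule bnd')
      then show "(r m a)\<^sup>2 \<le> L\<^sup>2" by (metis abs_ge_zero power2_abs power_mono)
    qed
    then show ?thesis by simp
  qed
  have qbound: "q N a \<le> L * sqrt (real (card A) * real N)" if a: "a \<in> A" for a
  proof -
    have "(q N a)\<^sup>2 \<le> (\<Sum>a\<in>A. (q N a)\<^sup>2)"
      by (rule member_le_sum[OF a]) (auto simp: fin)
    also have "\<dots> \<le> (\<Sum>m<N. \<Sum>a\<in>A. (r m a)\<^sup>2)" by (rule sq)
    also have "\<dots> \<le> (\<Sum>m<N. real (card A) * L\<^sup>2)" by (rule sum_mono) (rule rsq)
    also have "\<dots> = (L * sqrt (real (card A) * real N))\<^sup>2"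
      using L0 by (simp add: power_mult_distrib)
    finally have "(q N a)\<^sup>2 \<le> (L * sqrt (real (card A) * real N))\<^sup>2" .
    then show ?thesis by (rule power2_le_imp_le) (simp add: L0)
  qed
  have wsum: "(\<Sum>n<M. real (n + 1) * r n a) \<le> real M * q M a" if a: "a \<in> A" for a M
  proof (induction M)
    case 0 then show ?case by simp
  next
    case (Suc M)
    have "(\<Sum>n<Suc M. real (n + 1) * r n a) \<le> real M * q M a + real (M + 1) * r M a"
      using Suc by simp
    also have "\<dots> \<le> real (M + 1) * (q M a + r M a)"
      using qnn[OF a, of M] by (simp add: algebra_simps)
    also have "\<dots> \<le> real (Suc M) * q (Suc M) a"
      unfolding qs'[OF a] by (simp add: mult_left_mono)
    finally show ?case .
  qed
  show "\<forall>a\<in>A. (\<Sum>n<N. real (n + 1) * (v n a - (\<Sum>b\<in>A. rm (q n) A b * v n b))) \<le> real N * (L * sqrt (real (card A) * real N))"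
  proof
    fix a assume a: "a \<in> A"
    have "(\<Sum>n<N. real (n + 1) * r n a) \<le> real N * q N a" by (rule wsum[OF a])
    also have "\<dots> \<le> real N * (L * sqrt (real (card A) * real N))"
      by (intro mult_left_mono qbound a) auto
    finally show "(\<Sum>n<N. real (n + 1) * (v n a - (\<Sum>b\<in>A. rm (q n) A b * v n b))) \<le> real N * (L * sqrt (real (card A) * real N))"
      by (simp add: r_def)
  qed
  show "(\<Sum>a\<in>A. rm (q (Suc n)) A a * (v n a - (\<Sum>b\<in>A. rm (q n) A b * v n b))) \<ge> 0"
  proof -
    have goal: "(\<Sum>a\<in>A. rm (q (Suc n)) A a * r n a) \<ge> 0"
    proof (cases "\<exists>b\<in>A. 0 < q (Suc n) b")
      case True
      have num: "0 \<le> (\<Sum>a\<in>A. q (Suc n) a * r n a)"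
      proof -
        have "(\<Sum>a\<in>A. q n a * r n a) \<le> (\<Sum>a\<in>A. q (Suc n) a * r n a)"
        proof (rule sum_mono)
          fix a assume a: "a \<in> A"
          have "0 \<le> q n a" by (rule qnn[OF a])
          then show "q n a * r n a \<le> q (Suc n) a * r n a"
            unfolding qs'[OF a]
            by (cases "0 \<le> q n a + r n a") (auto simp: max_def algebra_simps mult_nonneg_nonpos intro: mult_nonneg_nonneg)
        qed
        then show ?thesis using ortho[of n] by simp
      qed
      have "(\<Sum>c\<in>A. q (Suc n) c) * (\<Sum>a\<in>A. rm (q (Suc n)) A a * r n a) = (\<Sum>a\<in>A. q (Suc n) a * r n a)"
        by (rule rm_inner[OF fin]) (simp add: qnn)
      moreover have "0 < (\<Sum>c\<in>A. q (Suc n) c)"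
      proof -
        obtain b where b: "b \<in> A" "0 < q (Suc n) b" using True by auto
        have "q (Suc n) b \<le> (\<Sum>c\<in>A. q (Suc n) c)"
          by (rule member_le_sum[OF b(1)]) (auto simp: fin qnn)
        then show ?thesis using b by linarith
      qed
      ultimately show ?thesis using num by (metis zero_le_mult_iff not_less)
    next
      case False
      then have z: "\<And>a. a \<in> A \<Longrightarrow> q n a + r n a \<le> 0"
        using qs' by (metis max.cobounded2 not_le max_def)
      have "\<And>a. a \<in> A \<Longrightarrow> q n a * r n a \<le> - (q n a)\<^sup>2"
      proof -
        fix a assume a: "a \<in> A"
        have "r n a \<le> - q n a" using z[OF a] by simp
        then have "q n a * r n a \<le> q n a * (- q n a)" using qnn[OF a, of n] by (rule mult_left_mono)
        then show "q n a * r n a \<le> - (q n a)\<^sup>2" by (simp add: power2_eq_square)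
      qed
      then have "(\<Sum>a\<in>A. q n a * r n a) \<le> (\<Sum>a\<in>A. - (q n a)\<^sup>2)" by (rule sum_mono)
      then have "(\<Sum>a\<in>A. (q n a)\<^sup>2) \<le> 0" using ortho[of n] by (simp add: sum_negf)
      then have qz: "\<And>a. a \<in> A \<Longrightarrow> q n a = 0"
        using sum_nonneg_eq_0_iff[OF fin, of "\<lambda>a. (q n a)\<^sup>2"] by (metis (no_types, lifting) order.antisym sum_nonneg zero_le_power2 power_eq_0_iff)
      have "\<not> (\<exists>b\<in>A. 0 < q n b)" using qz by auto
      then have rmn: "\<And>b. rm (q n) A b = 1 / real (card A)" by (simp add: rm_def)
      have "(\<Sum>a\<in>A. r n a) = (\<Sum>a\<in>A. v n a) - real (card A) * ((1 / real (card A)) * (\<Sum>b\<in>A. v n b))"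
        unfolding r_def rmn by (simp add: sum_subtractf sum_distrib_left)
      also have "\<dots> = 0" using fin ne by simp
      finally have "(\<Sum>a\<in>A. r n a) = 0" .
      moreover have "\<And>a. rm (q (Suc n)) A a = 1 / real (card A)" using False by (simp add: rm_def)
      ultimately show ?thesis by (simp add: sum_divide_distrib[symmetric])
    qed
    then show ?thesis by (simp add: r_def)
  qed
qed


definition Om :: "'a efg \<Rightarrow> nat \<Rightarrow> ('a list set \<Rightarrow> 'a \<Rightarrow> real) \<Rightarrow> ('a list set \<Rightarrow> 'a \<Rightarrow> real) \<Rightarrow> 'a list \<Rightarrow> 'a \<Rightarrow> real" where
  "Om G p own oth h a = chi G h a * ow G (3 - p) oth h a * ow G p own h a"

definition EV :: "'a efg \<Rightarrow> nat \<Rightarrow> ('a list set \<Rightarrow> 'a \<Rightarrow> real) \<Rightarrow> ('a list set \<Rightarrow> 'a \<Rightarrow> real) \<Rightarrow> 'a list \<Rightarrow> real" where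
  "EV G p own oth x = (\<Sum>z\<in>ext G x. pp (Om G p own oth) x z * (sg p * util G z))"

definition cr :: "'a efg \<Rightarrow> nat \<Rightarrow> ('a list set \<Rightarrow> 'a \<Rightarrow> real) \<Rightarrow> 'a list \<Rightarrow> real" where
  "cr G p oth h = chance_reach G h * reach G (3 - p) oth h"

lemma own_seq_mf: "own_seq G p h = map (\<lambda>i. (iset G (take i h), h ! i)) (filter (\<lambda>i. plr G (take i h) = p) [0..<length h])"
  unfolding own_seq_def by (rule concat_if_map)

lemma own_seq_app: "own_seq G p (x @ b # w) = own_seq G p x @
   (if plr G x = p then [(iset G x, b)] else []) @
   map (\<lambda>i. (iset G (take i (x @ b # w)), (x @ b # w) ! i)) (filter (\<lambda>i. plr G (take i (x @ b # w)) = p) [Suc (length x)..<length (x @ b # w)])"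
proof -
  let ?h = "x @ b # w"
  have u: "[0..<length ?h] = [0..<length x] @ [length x] @ [Suc (length x)..<length ?h]"
  proof -
    have "[0..<length x + Suc (length w)] = [0..<length x] @ [length x..<length x + Suc (length w)]"
      by (rule upt_add_eq_append) simp
    moreover have "[length x..<length x + Suc (length w)] = length x # [Suc (length x)..<length x + Suc (length w)]"
      by (rule upt_conv_Cons) simp
    ultimately show ?thesis by (simp del: upt_Suc)
  qed
  have "map (\<lambda>i. (iset G (take i ?h), ?h ! i)) (filter (\<lambda>i. plr G (take i ?h) = p) [0..<length x]) =
        map (\<lambda>i. (iset G (take i x), x ! i)) (filter (\<lambda>i. plr G (take i x) = p) [0..<length x])"
  proof -
    have e1: "filter (\<lambda>i. plr G (take i ?h) = p) [0..<length x] = filter (\<lambda>i. plr G (take i x) = p) [0..<length x]"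
      by (rule filter_cong[OF refl]) simp
    have e2: "\<And>i. i \<in> set (filter (\<lambda>i. plr G (take i x) = p) [0..<length x]) \<Longrightarrow>
       (iset G (take i ?h), ?h ! i) = (iset G (take i x), x ! i)"
      by (simp add: nth_append)
    show ?thesis unfolding e1 by (rule map_cong[OF refl e2])
  qed
  note first = this
  let ?F = "\<lambda>i. (iset G (take i ?h), ?h ! i)"
  let ?P = "\<lambda>i. plr G (take i ?h) = p"
  have mid: "map ?F (filter ?P [length x]) = (if plr G x = p then [(iset G x, b)] else [])"
    by simp
  have "own_seq G p ?h = map ?F (filter ?P [0..<length x]) @ map ?F (filter ?P [length x]) @ map ?F (filter ?P [Suc (length x)..<length ?h])"
    unfolding own_seq_mf[of G p ?h] u by (simp only: filter_append map_append)
  also note first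
  also note mid
  finally show ?thesis unfolding own_seq_mf[of G p x] .
qed

context fixes G :: "'a efg" assumes wf: "wf_game G"
begin

lemma infoset_same_seq:
  assumes p: "p \<in> {1, 2}" and I: "I \<in> infosets G p" and h1: "h1 \<in> I" and h2: "h2 \<in> I"
  shows "own_seq G p h1 = own_seq G p h2"
proof -
  obtain h0 where h0: "nonterm G h0" "plr G h0 = p" "I = iset G h0" using I by (auto simp: infosets_def)
  have "plr G h0 \<in> {1, 2}" using h0 p by simp
  then show ?thesis using perfect_recall[OF wf h0(1)] h0 h1 h2 by metis
qed

lemma infoset_uniq:
  assumes p: "p \<in> {1, 2}" and I: "I \<in> infosets G p" and h1: "x @ b1 # w1 \<in> I" and h2: "x @ b2 # w2 \<in> I"
    and px: "plr G x = p"
  shows "b1 = b2"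
proof -
  have "own_seq G p (x @ b1 # w1) = own_seq G p (x @ b2 # w2)" by (rule infoset_same_seq[OF p I h1 h2])
  then have "own_seq G p (x @ b1 # w1) ! length (own_seq G p x) = own_seq G p (x @ b2 # w2) ! length (own_seq G p x)"
    by simp
  then show ?thesis unfolding own_seq_app using px by (simp add: nth_append)
qed

lemma infoset_antichain:
  assumes p: "p \<in> {1, 2}" and I: "I \<in> infosets G p" and h1: "h1 \<in> I" and h2: "h1 @ w \<in> I"
  shows "w = []"
proof (rule ccontr)
  assume "w \<noteq> []"
  then obtain b w' where w: "w = b # w'" by (cases w) auto
  have "plr G h1 = p" using rep_props(3)[OF wf p I h1] by simp
  have "own_seq G p h1 = own_seq G p (h1 @ w)" by (rule infoset_same_seq[OF p I h1 h2])
  then have "length (own_seq G p h1) = length (own_seq G p (h1 @ b # w'))" using w by simp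
  then show False unfolding own_seq_app using \<open>plr G h1 = p\<close> by simp
qed

lemma payoff_ge: "y \<in> terminals G \<Longrightarrow> z \<in> terminals G \<Longrightarrow> util G y - util G z \<le> payoff_range G"
proof -
  assume yz: "y \<in> terminals G" "z \<in> terminals G"
  have "{util G y - util G z | y z. y \<in> terminals G \<and> z \<in> terminals G} = (\<lambda>(y, z). util G y - util G z) ` (terminals G \<times> terminals G)"
    by auto
  then have fin: "finite {util G y - util G z | y z. y \<in> terminals G \<and> z \<in> terminals G}"
    using fin_terminals[OF wf] by simp
  show ?thesis unfolding payoff_range_def by (rule Max_ge[OF fin]) (use yz in blast)
qed

lemma cfv_factor: "cfv G p own oth x = cr G p oth x * EV G p own oth x"
proof -
  have "cfv G p own oth x = (\<Sum>z\<in>ext G x. cr G p oth x * (pp (Om G p own oth) x z * (sg p * util G z)))"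
    unfolding cfv_def
  proof (rule sum.cong[OF refl])
    fix z assume "z \<in> ext G x"
    then obtain w where z: "z = x @ w" by (auto simp: ext_def)
    show "chance_reach G z * reach G (3 - p) oth z * cond_reach G p own x z * (sg p * util G z) =
          cr G p oth x * (pp (Om G p own oth) x z * (sg p * util G z))"
      unfolding cr_def chance_pp reach_pp cond_pp z pp_split[of _ x w] Om_def pp_mult[symmetric]
      by (simp add: algebra_simps)
  qed
  then show ?thesis by (simp add: EV_def sum_distrib_left)
qed

lemma cr_step: "plr G h = p \<Longrightarrow> p \<in> {1, 2} \<Longrightarrow> cr G p oth (h @ [b]) = cr G p oth h"
  unfolding cr_def chance_pp reach_pp pp_split pp_step[of _ h b "[]", simplified]
  by (auto simp: chi_def ow_def)

lemma EV_rec: "nonterm G h \<Longrightarrow> EV G p own oth h = (\<Sum>b\<in>acts G h. Om G p own oth h b * EV G p own oth (h @ [b]))"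
  unfolding EV_def sum_ext_nonterm[OF wf] sum_distrib_left
  by (intro sum.cong refl) (auto simp: ext_def pp_step)

lemma Om_dist:
  assumes p: "p \<in> {1, 2}" and f1: "fullstrat G p own" and f2: "fullstrat G (3 - p) oth" and h: "nonterm G h"
  shows "(\<forall>a\<in>acts G h. 0 \<le> Om G p own oth h a) \<and> sum (Om G p own oth h) (acts G h) = 1"
proof -
  have "plr G h = 0 \<or> plr G h = p \<or> plr G h = 3 - p" using plr_cases[OF wf h] p by auto
  moreover have "p \<noteq> 0" "3 - p \<noteq> 0" "3 - p \<noteq> p" using p by auto
  ultimately show ?thesis using chn_dist[OF wf h] f1 f2 h unfolding fullstrat_def Om_def chi_def ow_def
    by auto
qed

lemma EV_diff:
  assumes p: "p \<in> {1, 2}" and f1: "fullstrat G p own" and f2: "fullstrat G (3 - p) oth"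
    and x: "x \<in> hist G" and y: "y \<in> hist G"
  shows "\<bar>EV G p own oth x - EV G p own oth y\<bar> \<le> payoff_range G"
proof -
  let ?P = "pp (Om G p own oth)"
  let ?u = "\<lambda>z. sg p * util G z"
  have D: "\<And>h'. nonterm G h' \<Longrightarrow> sum (Om G p own oth h') (acts G h') = 1"
    using Om_dist[OF p f1 f2] by blast
  have N: "\<And>h' a. nonterm G h' \<Longrightarrow> a \<in> acts G h' \<Longrightarrow> 0 \<le> Om G p own oth h' a"
    using Om_dist[OF p f1 f2] by blast
  have sx: "sum (?P x) (ext G x) = 1" by (rule sum_pp_one[OF wf x D])
  have sy: "sum (?P y) (ext G y) = 1" by (rule sum_pp_one[OF wf y D])
  have nn: "\<And>h z. z \<in> ext G h \<Longrightarrow> 0 \<le> ?P h z"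
    by (rule pp_nonneg[OF wf]) (auto simp: ext_def terminals_def intro: N)
  have ub: "\<bar>?u z - ?u z'\<bar> \<le> payoff_range G" if "z \<in> ext G x" "z' \<in> ext G y" for z z'
  proof -
    have "z \<in> terminals G" "z' \<in> terminals G" using that by (auto simp: ext_def)
    then have "util G z - util G z' \<le> payoff_range G" "util G z' - util G z \<le> payoff_range G"
      using payoff_ge by auto
    then show ?thesis using p by (auto simp: sg_def)
  qed
  have "EV G p own oth x - EV G p own oth y = (\<Sum>z\<in>ext G x. \<Sum>z'\<in>ext G y. ?P x z * ?P y z' * (?u z - ?u z'))"
  proof -
    have "(\<Sum>z\<in>ext G x. \<Sum>z'\<in>ext G y. ?P x z * ?P y z' * (?u z - ?u z')) =
      (\<Sum>z\<in>ext G x. ?P x z * ?u z * (\<Sum>z'\<in>ext G y. ?P y z')) - (\<Sum>z\<in>ext G x. ?P x z * (\<Sum>z'\<in>ext G y. ?P y z' * ?u z'))"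
      by (simp add: sum_distrib_left sum_subtractf[symmetric] algebra_simps)
    also have "\<dots> = EV G p own oth x - (\<Sum>z\<in>ext G x. ?P x z) * EV G p own oth y"
      unfolding sy EV_def by (simp add: sum_distrib_right)
    finally show ?thesis using sx by simp
  qed
  also have "\<bar>\<dots>\<bar> \<le> (\<Sum>z\<in>ext G x. \<Sum>z'\<in>ext G y. ?P x z * ?P y z' * payoff_range G)"
  proof -
    have "\<bar>\<Sum>z\<in>ext G x. \<Sum>z'\<in>ext G y. ?P x z * ?P y z' * (?u z - ?u z')\<bar> \<le>
          (\<Sum>z\<in>ext G x. \<bar>\<Sum>z'\<in>ext G y. ?P x z * ?P y z' * (?u z - ?u z')\<bar>)" by (rule sum_abs)
    also have "\<dots> \<le> (\<Sum>z\<in>ext G x. \<Sum>z'\<in>ext G y. \<bar>?P x z * ?P y z' * (?u z - ?u z')\<bar>)"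
      by (intro sum_mono sum_abs)
    also have "\<dots> \<le> (\<Sum>z\<in>ext G x. \<Sum>z'\<in>ext G y. ?P x z * ?P y z' * payoff_range G)"
    proof (intro sum_mono)
      fix z z' assume zz: "z \<in> ext G x" "z' \<in> ext G y"
      have "\<bar>?P x z * ?P y z' * (?u z - ?u z')\<bar> = ?P x z * ?P y z' * \<bar>?u z - ?u z'\<bar>"
        using nn[OF zz(1)] nn[OF zz(2)] by (simp add: abs_mult)
      also have "\<dots> \<le> ?P x z * ?P y z' * payoff_range G"
        using nn[OF zz(1)] nn[OF zz(2)] ub[OF zz] by (intro mult_left_mono) auto
      finally show "\<bar>?P x z * ?P y z' * (?u z - ?u z')\<bar> \<le> ?P x z * ?P y z' * payoff_range G" .
    qed
    finally show ?thesis .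
  qed
  also have "\<dots> = payoff_range G"
    using sx sy by (simp add: sum_distrib_left[symmetric] sum_distrib_right[symmetric])
  finally show ?thesis .
qed

lemma prefix_comp: "h1 @ w1 = h2 @ w2 \<Longrightarrow> (\<exists>u. h1 = h2 @ u) \<or> (\<exists>u. h2 = h1 @ u)"
  by (metis append_eq_append_conv2)

lemma cr_sum_le1:
  assumes p: "p \<in> {1, 2}" and I: "I \<in> infosets G p" and f2: "fullstrat G (3 - p) oth"
  shows "(\<Sum>h\<in>I. cr G p oth h) \<le> 1"
proof -
  define own0 where "own0 h' b = (if \<exists>h\<in>I. \<exists>w. h = h' @ b # w then 1 else
       if \<exists>b'. \<exists>h\<in>I. \<exists>w. h = h' @ b' # w then 0 else 1 / real (card (acts G h')))" for h' b
  define W where "W h' b = chi G h' b * ow G (3 - p) oth h' b * (if plr G h' = p then own0 h' b else 1)" for h' b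
  have hI: "h \<in> hist G \<and> nonterm G h \<and> plr G h = p" if h: "h \<in> I" for h
  proof -
    have r: "nonterm G h \<and> plr G h = p \<and> iset G h = I \<and> acts G h = iacts G I" by (rule rep_props(3)[OF wf p I h])
    then show ?thesis unfolding nonterm_def by blast
  qed
  have own0_dist: "(\<forall>b\<in>acts G h'. 0 \<le> own0 h' b) \<and> sum (own0 h') (acts G h') = 1"
    if h': "nonterm G h'" "plr G h' = p" for h'
  proof (cases "\<exists>b'. \<exists>h\<in>I. \<exists>w. h = h' @ b' # w")
    case True
    then obtain b' h w where bh: "h \<in> I" "h = h' @ b' # w" by auto
    have b': "b' \<in> acts G h'" using hI[OF bh(1)] bh(2) step_acts[OF wf] by auto
    have "\<And>b. own0 h' b = (if b = b' then 1 else 0)"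
    proof -
      fix b
      show "own0 h' b = (if b = b' then 1 else 0)"
      proof (cases "\<exists>h\<in>I. \<exists>w. h = h' @ b # w")
        case True
        then obtain h2 w2 where "h2 \<in> I" "h2 = h' @ b # w2" by auto
        then have "b = b'" using infoset_uniq[OF p I, of h' b w2 b' w] bh h'(2) by auto
        then show ?thesis using True by (simp add: own0_def)
      next
        case False
        then have "b \<noteq> b'" using bh by auto
        then show ?thesis using False \<open>h \<in> I\<close> bh(2) unfolding own0_def by auto
      qed
    qed
    then show ?thesis using b' fin_acts[OF wf] by (simp add: sum.delta)
  next
    case False
    have "acts G h' \<noteq> {}" using h' by (simp add: nonterm_def)
    then show ?thesis using False fin_acts[OF wf, of h'] unfolding own0_def by auto
  qed
  have Wd: "(\<forall>a\<in>acts G h. 0 \<le> W h a) \<and> sum (W h) (acts G h) = 1" if h: "nonterm G h" for h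
  proof -
    have "plr G h = 0 \<or> plr G h = p \<or> plr G h = 3 - p" using plr_cases[OF wf h] p by auto
    moreover have "p \<noteq> 0" "3 - p \<noteq> 0" "3 - p \<noteq> p" using p by auto
    ultimately show ?thesis using chn_dist[OF wf h] f2 h own0_dist[OF h] unfolding fullstrat_def W_def chi_def ow_def
      by auto
  qed
  have Wpp: "pp W [] h = cr G p oth h" if h: "h \<in> I" for h
  proof -
    have "pp (\<lambda>h' b. if plr G h' = p then own0 h' b else 1) [] h = 1"
      unfolding pp_def
    proof (rule prod.neutral, rule ballI)
      fix i assume "i \<in> {length []..<length h}"
      then have i: "i < length h" by simp
      have "h = take i h @ (h ! i) # drop (Suc i) h" using i by (simp add: id_take_nth_drop)
      then have "own0 (take i h) (h ! i) = 1" using h unfolding own0_def by metis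
      then show "(if plr G (take i h) = p then own0 (take i h) (h ! i) else 1) = 1" by simp
    qed
    then show ?thesis unfolding W_def pp_mult[symmetric] cr_def chance_pp reach_pp by simp
  qed
  have Wn: "\<And>h' a. nonterm G h' \<Longrightarrow> a \<in> acts G h' \<Longrightarrow> 0 \<le> W h' a" using Wd by blast
  have Ws: "\<And>h'. nonterm G h' \<Longrightarrow> sum (W h') (acts G h') = 1" using Wd by blast
  have "(\<Sum>h\<in>I. cr G p oth h) = (\<Sum>h\<in>I. \<Sum>z\<in>ext G h. pp W [] z)"
  proof (rule sum.cong[OF refl])
    fix h assume h: "h \<in> I"
    have "(\<Sum>z\<in>ext G h. pp W [] z) = (\<Sum>z\<in>ext G h. pp W [] h * pp W h z)"
      by (intro sum.cong refl) (auto simp: ext_def pp_split)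
    also have "\<dots> = pp W [] h" using sum_pp_one[OF wf _ Ws, of h] hI[OF h] by (simp add: sum_distrib_left[symmetric])
    finally show "cr G p oth h = (\<Sum>z\<in>ext G h. pp W [] z)" using Wpp[OF h] by simp
  qed
  also have "\<dots> = (\<Sum>z\<in>(\<Union>h\<in>I. ext G h). pp W [] z)"
  proof (rule sum.UNION_disjoint[symmetric])
    show "finite I" by (rule fin_infoset[OF wf p I])
    show "\<forall>h\<in>I. finite (ext G h)" by (simp add: fin_ext[OF wf])
    show "\<forall>h1\<in>I. \<forall>h2\<in>I. h1 \<noteq> h2 \<longrightarrow> ext G h1 \<inter> ext G h2 = {}"
    proof (intro ballI impI)
      fix h1 h2 assume h12: "h1 \<in> I" "h2 \<in> I" "h1 \<noteq> h2"
      show "ext G h1 \<inter> ext G h2 = {}"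
      proof (rule ccontr)
        assume "ext G h1 \<inter> ext G h2 \<noteq> {}"
        then obtain w1 w2 where "h1 @ w1 = h2 @ w2" by (auto simp: ext_def)
        then have "(\<exists>u. h1 = h2 @ u) \<or> (\<exists>u. h2 = h1 @ u)" by (rule prefix_comp)
        then show False using infoset_antichain[OF p I] h12 by auto
      qed
    qed
  qed
  also have "\<dots> \<le> (\<Sum>z\<in>terminals G. pp W [] z)"
    by (rule sum_mono2[OF fin_terminals[OF wf]]) (auto simp: ext_def terminals_def intro!: pp_nonneg[OF wf] Wn)
  also have "\<dots> = 1" using sum_pp_one[OF wf nil_hist[OF wf] Ws] by (simp add: ext_nil[OF wf])
  finally show ?thesis .
qed

lemma regret_bound:
  assumes p: "p \<in> {1, 2}" and f1: "fullstrat G p \<sigma>" and f2: "fullstrat G (3 - p) oth"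
    and I: "I \<in> infosets G p" and a: "a \<in> iacts G I"
  shows "\<bar>cvec G p \<sigma> oth I a - (\<Sum>b\<in>iacts G I. \<sigma> I b * cvec G p \<sigma> oth I b)\<bar> \<le> payoff_range G"
proof -
  have hI: "h \<in> hist G \<and> nonterm G h \<and> plr G h = p \<and> iset G h = I \<and> acts G h = iacts G I" if h: "h \<in> I" for h
  proof -
    have r: "nonterm G h \<and> plr G h = p \<and> iset G h = I \<and> acts G h = iacts G I" by (rule rep_props(3)[OF wf p I h])
    then show ?thesis unfolding nonterm_def by blast
  qed
  let ?E = "EV G p \<sigma> oth"
  have Eh: "(\<Sum>b\<in>iacts G I. \<sigma> I b * ?E (h @ [b])) = ?E h" if h: "h \<in> I" for h
  proof -
    have "?E h = (\<Sum>b\<in>acts G h. Om G p \<sigma> oth h b * ?E (h @ [b]))" using EV_rec hI[OF h] by blast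
    also have "\<dots> = (\<Sum>b\<in>iacts G I. \<sigma> I b * ?E (h @ [b]))"
      using hI[OF h] p by (intro sum.cong) (auto simp: Om_def chi_def ow_def)
    finally show ?thesis by simp
  qed
  have cv: "\<And>h b. h \<in> I \<Longrightarrow> cfv G p \<sigma> oth (h @ [b]) = cr G p oth h * ?E (h @ [b])"
    using cfv_factor cr_step hI p by metis
  have "cvec G p \<sigma> oth I a - (\<Sum>b\<in>iacts G I. \<sigma> I b * cvec G p \<sigma> oth I b) =
        (\<Sum>h\<in>I. cr G p oth h * ?E (h @ [a])) - (\<Sum>h\<in>I. cr G p oth h * (\<Sum>b\<in>iacts G I. \<sigma> I b * ?E (h @ [b])))"
    unfolding cvec_def using cv
    by (simp add: sum_distrib_left sum.swap[of _ "iacts G I" I] algebra_simps)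
  also have "\<dots> = (\<Sum>h\<in>I. cr G p oth h * (?E (h @ [a]) - ?E h))"
    using Eh by (simp add: sum_subtractf[symmetric] algebra_simps)
  finally have eq: "cvec G p \<sigma> oth I a - (\<Sum>b\<in>iacts G I. \<sigma> I b * cvec G p \<sigma> oth I b) = (\<Sum>h\<in>I. cr G p oth h * (?E (h @ [a]) - ?E h))" .
  have crn: "\<And>h. h \<in> I \<Longrightarrow> 0 \<le> cr G p oth h"
  proof -
    fix h assume h: "h \<in> I"
    have "0 \<le> chance_reach G h" unfolding chance_pp
      by (rule pp_nonneg[OF wf]) (use hI[OF h] chn_dist[OF wf] in \<open>auto simp: chi_def\<close>)
    moreover have "0 \<le> reach G (3 - p) oth h" unfolding reach_pp
      by (rule pp_nonneg[OF wf]) (use hI[OF h] f2 in \<open>auto simp: ow_def fullstrat_def\<close>)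
    ultimately show "0 \<le> cr G p oth h" by (simp add: cr_def)
  qed
  have ha: "\<And>h. h \<in> I \<Longrightarrow> h @ [a] \<in> hist G" using hI a by (auto simp: acts_def)
  have "\<bar>\<Sum>h\<in>I. cr G p oth h * (?E (h @ [a]) - ?E h)\<bar> \<le> (\<Sum>h\<in>I. cr G p oth h * payoff_range G)"
  proof -
    have "\<bar>\<Sum>h\<in>I. cr G p oth h * (?E (h @ [a]) - ?E h)\<bar> \<le> (\<Sum>h\<in>I. \<bar>cr G p oth h * (?E (h @ [a]) - ?E h)\<bar>)"
      by (rule sum_abs)
    also have "\<dots> \<le> (\<Sum>h\<in>I. cr G p oth h * payoff_range G)"
    proof (rule sum_mono)
      fix h assume h: "h \<in> I"
      have "\<bar>?E (h @ [a]) - ?E h\<bar> \<le> payoff_range G"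
        by (rule EV_diff[OF p f1 f2 ha[OF h]]) (use hI[OF h] in blast)
      then show "\<bar>cr G p oth h * (?E (h @ [a]) - ?E h)\<bar> \<le> cr G p oth h * payoff_range G"
        using crn[OF h] by (simp add: abs_mult mult_left_mono)
    qed
    finally show ?thesis .
  qed
  also have "\<dots> = (\<Sum>h\<in>I. cr G p oth h) * payoff_range G" by (simp add: sum_distrib_right)
  also have "\<dots> \<le> payoff_range G"
  proof -
    obtain h where h: "h \<in> I" using rep_props(1)[OF wf p I] by blast
    have "0 \<le> payoff_range G" using EV_diff[OF p f1 f2 ha[OF h] ha[OF h]] by simp
    then show ?thesis using mult_right_mono[OF cr_sum_le1[OF p I f2]] by simp
  qed
  finally show ?thesis using eq by simp
qed

end

lemma exp_util_lin2: "exp_util G r1 (\<lambda>h. c * (\<Sum>i\<in>S. w i * R i h)) = c * (\<Sum>i\<in>S. w i * exp_util G r1 (R i))"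
proof -
  have "exp_util G r1 (\<lambda>h. c * (\<Sum>i\<in>S. w i * R i h)) =
     (\<Sum>z\<in>terminals G. \<Sum>i\<in>S. c * (w i * (chance_reach G z * r1 z * R i z * util G z)))"
    unfolding exp_util_def by (intro sum.cong refl) (simp add: sum_distrib_left sum_distrib_right mult_ac)
  also have "\<dots> = (\<Sum>i\<in>S. \<Sum>z\<in>terminals G. c * (w i * (chance_reach G z * r1 z * R i z * util G z)))"
    by (rule sum.swap)
  also have "\<dots> = c * (\<Sum>i\<in>S. w i * exp_util G r1 (R i))"
    unfolding exp_util_def by (simp add: sum_distrib_left)
  finally show ?thesis .
qed

lemma exp_util_lin1: "exp_util G (\<lambda>h. c * (\<Sum>i\<in>S. w i * R i h)) r2 = c * (\<Sum>i\<in>S. w i * exp_util G (R i) r2)"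
proof -
  have "exp_util G (\<lambda>h. c * (\<Sum>i\<in>S. w i * R i h)) r2 =
     (\<Sum>z\<in>terminals G. \<Sum>i\<in>S. c * (w i * (chance_reach G z * R i z * r2 z * util G z)))"
    unfolding exp_util_def by (intro sum.cong refl) (simp add: sum_distrib_left sum_distrib_right mult_ac)
  also have "\<dots> = (\<Sum>i\<in>S. \<Sum>z\<in>terminals G. c * (w i * (chance_reach G z * R i z * r2 z * util G z)))"
    by (rule sum.swap)
  also have "\<dots> = c * (\<Sum>i\<in>S. w i * exp_util G (R i) r2)"
    unfolding exp_util_def by (simp add: sum_distrib_left)
  finally show ?thesis .
qed

lemma sum_shift1: "(\<Sum>i=1..t. g i) = (\<Sum>i<t. g (Suc i) :: real)"
  by (induction t) auto

context fixes G :: "'a efg" assumes wf: "wf_game G"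
begin

lemma exp_util_cfv1: "exp_util G (reach G 1 s1) (reach G 2 s2) = cfv G 1 s1 s2 []"
  unfolding cfv_nil[OF wf] exp_util_def by (simp add: sg_def mult_ac)

lemma cfv2_cfv1: "cfv G 2 s2 s1 [] = - cfv G 1 s1 s2 []"
  unfolding cfv_nil[OF wf] by (simp add: sg_def mult_ac sum_negf[symmetric])

lemma cfr_full: "p \<in> {1, 2} \<Longrightarrow> fullstrat G p (cfr_strat G q n)"
  unfolding fullstrat_def cfr_strat_def
proof (intro allI impI)
  fix h assume p: "p \<in> {1, 2}" and h: "nonterm G h \<and> plr G h = p"
  have A: "iacts G (iset G h) = acts G h" using iacts_iset[OF wf] h p by auto
  have "finite (acts G h)" "acts G h \<noteq> {}" using fin_acts[OF wf] h by (auto simp: nonterm_def)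
  then show "(\<forall>a\<in>acts G h. 0 \<le> rm (q n (iset G h)) (iacts G (iset G h)) a) \<and>
         sum (rm (q n (iset G h)) (iacts G (iset G h))) (acts G h) = 1"
    using rm_dist A by metis
qed

lemma cfr_strategy: "p \<in> {1, 2} \<Longrightarrow> strategy G p (cfr_strat G q n)"
  unfolding strategy_def
proof
  fix I assume p: "p \<in> {1, 2}" and I: "I \<in> infosets G p"
  have "rep I \<in> I" using rep_props[OF wf p I] by blast
  then have "acts G (rep I) = iacts G I" "nonterm G (rep I)" "plr G (rep I) = p" "iset G (rep I) = I"
    using rep_props(3)[OF wf p I] by blast+
  then show "(\<forall>a\<in>iacts G I. 0 \<le> cfr_strat G q n I a) \<and> sum (cfr_strat G q n I) (iacts G I) = 1"
    using cfr_full[OF p, of q n] unfolding fullstrat_def by metis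
qed

lemma regret_form:
  assumes p: "p \<in> {1, 2}" and fs: "fullstrat G p s"
  shows "cfv G p s oth [] - cfv G p \<sigma> oth [] =
    (\<Sum>I\<in>infosets G p. reach G p s (rep I) *
       (\<Sum>a\<in>iacts G I. s I a * (cvec G p \<sigma> oth I a - (\<Sum>b\<in>iacts G I. \<sigma> I b * cvec G p \<sigma> oth I b))))"
  unfolding perf_diff_grouped[OF wf p]
proof (rule sum.cong[OF refl])
  fix I assume I: "I \<in> infosets G p"
  have "rep I \<in> I" using rep_props[OF wf p I] by blast
  then have "acts G (rep I) = iacts G I" "nonterm G (rep I)" "plr G (rep I) = p" "iset G (rep I) = I"
    using rep_props(3)[OF wf p I] by blast+
  then have s1: "sum (s I) (iacts G I) = 1" using fs unfolding fullstrat_def by metis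
  have "(\<Sum>a\<in>iacts G I. s I a * (cvec G p \<sigma> oth I a - (\<Sum>b\<in>iacts G I. \<sigma> I b * cvec G p \<sigma> oth I b))) =
     (\<Sum>a\<in>iacts G I. s I a * cvec G p \<sigma> oth I a) - sum (s I) (iacts G I) * (\<Sum>b\<in>iacts G I. \<sigma> I b * cvec G p \<sigma> oth I b)"
    by (simp add: algebra_simps sum_subtractf sum_distrib_right)
  also have "\<dots> = (\<Sum>a\<in>iacts G I. (s I a - \<sigma> I a) * cvec G p \<sigma> oth I a)"
    unfolding s1 by (simp add: algebra_simps sum_subtractf)
  finally show "reach G p s (rep I) * (\<Sum>a\<in>iacts G I. (s I a - \<sigma> I a) * cvec G p \<sigma> oth I a) =
    reach G p s (rep I) * (\<Sum>a\<in>iacts G I. s I a * (cvec G p \<sigma> oth I a - (\<Sum>b\<in>iacts G I. \<sigma> I b * cvec G p \<sigma> oth I b)))"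
    by simp
qed

lemma reach_01:
  assumes fs: "fullstrat G p s" and h: "h \<in> hist G"
  shows "0 \<le> reach G p s h" "reach G p s h \<le> 1"
proof -
  have N: "\<And>h' a. nonterm G h' \<Longrightarrow> a \<in> acts G h' \<Longrightarrow> 0 \<le> ow G p s h' a \<and> ow G p s h' a \<le> 1"
    using fs full_le1[OF wf fs] unfolding fullstrat_def ow_def by auto
  show "0 \<le> reach G p s h" unfolding reach_pp by (rule pp_nonneg[OF wf h]) (use N in blast)
  show "reach G p s h \<le> 1" unfolding reach_pp by (rule pp_le1[OF wf h]) (use N in blast)
qed

lemma weighted_regret:
  assumes p: "p \<in> {1, 2}" and fs: "fullstrat G p s"
    and B: "\<And>I. I \<in> infosets G p \<Longrightarrow> 0 \<le> B I \<and> (\<forall>a\<in>iacts G I.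
        (\<Sum>n<N. w n * (cvec G p (\<sigma> n) (oth n) I a - (\<Sum>b\<in>iacts G I. \<sigma> n I b * cvec G p (\<sigma> n) (oth n) I b))) \<le> B I)"
  shows "(\<Sum>n<N. w n * (cfv G p s (oth n) [] - cfv G p (\<sigma> n) (oth n) [])) \<le> (\<Sum>I\<in>infosets G p. B I)"
proof -
  define r where "r n I a = cvec G p (\<sigma> n) (oth n) I a - (\<Sum>b\<in>iacts G I. \<sigma> n I b * cvec G p (\<sigma> n) (oth n) I b)" for n I a
  have "(\<Sum>n<N. w n * (cfv G p s (oth n) [] - cfv G p (\<sigma> n) (oth n) [])) =
        (\<Sum>n<N. \<Sum>I\<in>infosets G p. w n * (reach G p s (rep I) * (\<Sum>a\<in>iacts G I. s I a * r n I a)))"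
    unfolding regret_form[OF p fs] r_def by (simp add: sum_distrib_left)
  also have "\<dots> = (\<Sum>I\<in>infosets G p. \<Sum>n<N. w n * (reach G p s (rep I) * (\<Sum>a\<in>iacts G I. s I a * r n I a)))"
    by (rule sum.swap)
  also have "\<dots> = (\<Sum>I\<in>infosets G p. reach G p s (rep I) * (\<Sum>a\<in>iacts G I. s I a * (\<Sum>n<N. w n * r n I a)))"
  proof (rule sum.cong[OF refl])
    fix I
    have "(\<Sum>n<N. w n * (reach G p s (rep I) * (\<Sum>a\<in>iacts G I. s I a * r n I a))) =
          reach G p s (rep I) * (\<Sum>n<N. \<Sum>a\<in>iacts G I. s I a * (w n * r n I a))"
      by (simp add: sum_distrib_left mult_ac)
    also have "(\<Sum>n<N. \<Sum>a\<in>iacts G I. s I a * (w n * r n I a)) = (\<Sum>a\<in>iacts G I. \<Sum>n<N. s I a * (w n * r n I a))"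
      by (rule sum.swap)
    finally show "(\<Sum>n<N. w n * (reach G p s (rep I) * (\<Sum>a\<in>iacts G I. s I a * r n I a))) =
      reach G p s (rep I) * (\<Sum>a\<in>iacts G I. s I a * (\<Sum>n<N. w n * r n I a))"
      by (simp add: sum_distrib_left)
  qed
  also have "\<dots> \<le> (\<Sum>I\<in>infosets G p. B I)"
  proof (rule sum_mono)
    fix I assume I: "I \<in> infosets G p"
    have "rep I \<in> I" using rep_props[OF wf p I] by blast
    then have ri: "acts G (rep I) = iacts G I" "nonterm G (rep I)" "plr G (rep I) = p" "iset G (rep I) = I"
      using rep_props(3)[OF wf p I] by blast+
    then have s1: "sum (s I) (iacts G I) = 1" and s0: "\<forall>a\<in>iacts G I. 0 \<le> s I a"
      using fs unfolding fullstrat_def by metis+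
    have rh: "rep I \<in> hist G" using ri by (simp add: nonterm_def)
    have BI: "0 \<le> B I" "\<And>a. a \<in> iacts G I \<Longrightarrow> (\<Sum>n<N. w n * r n I a) \<le> B I" using B[OF I] unfolding r_def by auto
    have X: "(\<Sum>a\<in>iacts G I. s I a * (\<Sum>n<N. w n * r n I a)) \<le> B I"
    proof -
      have "(\<Sum>a\<in>iacts G I. s I a * (\<Sum>n<N. w n * r n I a)) \<le> (\<Sum>a\<in>iacts G I. s I a * B I)"
        by (intro sum_mono mult_left_mono BI(2)) (use s0 in auto)
      also have "\<dots> = B I" using s1 by (simp add: sum_distrib_right[symmetric])
      finally show ?thesis .
    qed
    show "reach G p s (rep I) * (\<Sum>a\<in>iacts G I. s I a * (\<Sum>n<N. w n * r n I a)) \<le> B I"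
    proof (cases "0 \<le> (\<Sum>a\<in>iacts G I. s I a * (\<Sum>n<N. w n * r n I a))")
      case True
      then show ?thesis using reach_01[OF fs rh] X by (meson mult_left_le_one_le order_trans)
    next
      case False
      then show ?thesis using reach_01[OF fs rh] BI(1)
        by (meson mult_nonneg_nonpos not_le order_trans less_imp_le)
    qed
  qed
  finally show ?thesis .
qed

end


lemma final_arith:
  fixes t :: nat and l N :: real and k :: nat
  assumes t: "1 \<le> t" and l: "0 \<le> l" and N: "0 \<le> N"
  shows "2 / (real t ^ 2 + real t) * (N * (real t * (l * sqrt (real k * real t)))) \<le> 2 * N * l * sqrt (real k / real t)"
proof -
  have t0: "0 < real t" using t by simp
  have e: "real k * real t = (real t)\<^sup>2 * (real k / real t)" using t0 by (simp add: power2_eq_square field_simps)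
  have "sqrt (real k * real t) = sqrt ((real t)\<^sup>2) * sqrt (real k / real t)"
    unfolding e by (rule real_sqrt_mult)
  then have sq: "sqrt (real k * real t) = real t * sqrt (real k / real t)"
    using t0 by simp
  have "2 / (real t ^ 2 + real t) * (N * (real t * (l * sqrt (real k * real t)))) =
        (2 * N * l * sqrt (real k / real t)) * (real t * real t / (real t ^ 2 + real t))"
    unfolding sq by (simp add: field_simps)
  also have "\<dots> \<le> (2 * N * l * sqrt (real k / real t)) * 1"
  proof (rule mult_left_mono)
    have "0 < real t ^ 2 + real t" using t0 by (intro add_nonneg_pos) auto
    then show "real t * real t / (real t ^ 2 + real t) \<le> 1" by (simp add: pos_divide_le_eq power2_eq_square)
    show "0 \<le> 2 * N * l * sqrt (real k / real t)" using N l by simp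
  qed
  finally show ?thesis by simp
qed

theorem theorem4:
  fixes G :: "'a efg" and q :: "nat \<Rightarrow> 'a list set \<Rightarrow> 'a \<Rightarrow> real" and t :: nat
  assumes "wf_game G" and "cfr_plus G q" and "1 \<le> t"
  shows "expl G
           (\<lambda>h. 2 / (real t ^ 2 + real t) * (\<Sum>i=1..t. real i * reach G 1 (cfr_strat G q i) h))
           (\<lambda>h. 2 / (real t ^ 2 + real t) * (\<Sum>i=0..<t. real (i + 1) * reach G 2 (cfr_strat G q i) h))
         \<le> 2 * real (card (infosets G 1 \<union> infosets G 2)) * payoff_range G
              * sqrt (real (max_acts G) / real t)"
proof -
  note wf = assms(1)
  define \<sigma> where "\<sigma> = cfr_strat G q"
  define c where "c = 2 / (real t ^ 2 + real t)"
  define l where "l = payoff_range G"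
  define k where "k = max_acts G"
  define B where "B = real t * (l * sqrt (real k * real t))"
  have c0: "0 \<le> c" unfolding c_def by simp
  have q0: "\<forall>I a. q 0 I a = 0" using assms(2) unfolding cfr_plus_def by blast
  have s1: "\<forall>n. \<forall>I\<in>infosets G 1. \<forall>a\<in>iacts G I.
        q (Suc n) I a = max 0 (q n I a
          + cf_vec G 1 (\<sigma> n) (\<sigma> n) I a
          - (\<Sum>b\<in>iacts G I. \<sigma> n I b * cf_vec G 1 (\<sigma> n) (\<sigma> n) I b))"
    using assms(2) unfolding cfr_plus_def \<sigma>_def by blast
  have s2: "\<forall>n. \<forall>I\<in>infosets G 2. \<forall>a\<in>iacts G I.
        q (Suc n) I a = max 0 (q n I a
          + cf_vec G 2 (\<sigma> (Suc n)) (\<sigma> n) I a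
          - (\<Sum>b\<in>iacts G I. \<sigma> n I b * cf_vec G 2 (\<sigma> (Suc n)) (\<sigma> n) I b))"
    using assms(2) unfolding cfr_plus_def \<sigma>_def by blast
  have full: "\<And>n p. p \<in> {1, 2} \<Longrightarrow> fullstrat G p (\<sigma> n)" unfolding \<sigma>_def by (rule cfr_full[OF wf])
  have full1: "\<And>n. fullstrat G 1 (\<sigma> n)" and full2: "\<And>n. fullstrat G 2 (\<sigma> n)" using full by auto
  have rmeq: "\<And>n I b. rm (q n I) (iacts G I) b = \<sigma> n I b" by (simp add: \<sigma>_def cfr_strat_def)
  have l0: "0 \<le> l"
  proof -
    have D: "\<And>h'. nonterm G h' \<Longrightarrow> sum (Om G 1 (\<sigma> 0) (\<sigma> 0) h') (acts G h') = 1"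
      using Om_dist[OF wf, of 1 "\<sigma> 0" "\<sigma> 0"] full by simp
    have "sum (pp (Om G 1 (\<sigma> 0) (\<sigma> 0)) []) (ext G []) = 1" by (rule sum_pp_one[OF wf nil_hist[OF wf] D])
    then have "ext G [] \<noteq> {}" by auto
    then obtain z where "z \<in> terminals G" by (auto simp: ext_nil[OF wf])
    then show ?thesis using payoff_ge[OF wf, of z z] by (simp add: l_def)
  qed
  have Aprops: "finite (iacts G I) \<and> iacts G I \<noteq> {}" if p: "p \<in> {1, 2}" and I: "I \<in> infosets G p" for p I
  proof -
    have r: "rep I \<in> I" using rep_props(1)[OF wf p I] .
    have "nonterm G (rep I) \<and> plr G (rep I) = p \<and> iset G (rep I) = I \<and> acts G (rep I) = iacts G I"
      by (rule rep_props(3)[OF wf p I r])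
    then show ?thesis using fin_acts[OF wf, of "rep I"] by (auto simp: nonterm_def)
  qed
  have kb: "card (iacts G I) \<le> k" if I: "I \<in> infosets G 1 \<union> infosets G 2" for I
  proof -
    have fin: "finite {card (iacts G I) | I. I \<in> infosets G 1 \<union> infosets G 2}"
      using fin_infosets[OF wf, of 1] fin_infosets[OF wf, of 2] by simp
    show ?thesis unfolding k_def max_acts_def by (rule Max_ge[OF fin]) (use I in blast)
  qed
  have Bmono: "real t * (l * sqrt (real (card (iacts G I)) * real t)) \<le> B" if I: "I \<in> infosets G 1 \<union> infosets G 2" for I
    unfolding B_def using kb[OF I] l0 by (intro mult_left_mono real_sqrt_le_mono mult_right_mono) auto
  have B0: "0 \<le> B" unfolding B_def using l0 by simp

  have P1: "(\<forall>a\<in>iacts G I. (\<Sum>n<t. real (n + 1) * (cvec G 1 (\<sigma> n) (\<sigma> n) I a - (\<Sum>b\<in>iacts G I. \<sigma> n I b * cvec G 1 (\<sigma> n) (\<sigma> n) I b))) \<le> B)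
      \<and> (\<forall>n. 0 \<le> (\<Sum>a\<in>iacts G I. \<sigma> (Suc n) I a * (cvec G 1 (\<sigma> n) (\<sigma> n) I a - (\<Sum>b\<in>iacts G I. \<sigma> n I b * cvec G 1 (\<sigma> n) (\<sigma> n) I b))))"
    if I: "I \<in> infosets G 1" for I
  proof -
    have A: "finite (iacts G I)" "iacts G I \<noteq> {}" using Aprops[of 1 I] I by auto
    have qs: "\<forall>n. \<forall>a\<in>iacts G I. q (Suc n) I a = max 0 (q n I a + cvec G 1 (\<sigma> n) (\<sigma> n) I a - (\<Sum>b\<in>iacts G I. rm (q n I) (iacts G I) b * cvec G 1 (\<sigma> n) (\<sigma> n) I b))"
      using s1 I unfolding cf_vec_cvec1 rmeq by simp
    have bnd: "\<forall>n. \<forall>a\<in>iacts G I. \<bar>cvec G 1 (\<sigma> n) (\<sigma> n) I a - (\<Sum>b\<in>iacts G I. rm (q n I) (iacts G I) b * cvec G 1 (\<sigma> n) (\<sigma> n) I b)\<bar> \<le> l"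
      unfolding rmeq l_def using regret_bound[OF wf, of 1 "\<sigma> _" "\<sigma> _" I] full1 full2 I by simp
    note R = rmplus[OF A(1) A(2), of "\<lambda>n. q n I" "\<lambda>n. cvec G 1 (\<sigma> n) (\<sigma> n) I" l, OF _ qs bnd]
    have R1: "\<forall>a\<in>iacts G I. (\<Sum>n<t. real (n + 1) * (cvec G 1 (\<sigma> n) (\<sigma> n) I a - (\<Sum>b\<in>iacts G I. \<sigma> n I b * cvec G 1 (\<sigma> n) (\<sigma> n) I b)))
       \<le> real t * (l * sqrt (real (card (iacts G I)) * real t))"
      using R(1)[of t] q0 by (simp add: rmeq)
    have R2: "\<forall>n. 0 \<le> (\<Sum>a\<in>iacts G I. \<sigma> (Suc n) I a * (cvec G 1 (\<sigma> n) (\<sigma> n) I a - (\<Sum>b\<in>iacts G I. \<sigma> n I b * cvec G 1 (\<sigma> n) (\<sigma> n) I b)))"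
      using R(2) q0 by (simp add: rmeq)
    show ?thesis using R1 R2 Bmono[of I] I by fastforce
  qed
  have P2: "\<forall>a\<in>iacts G I. (\<Sum>n<t. real (n + 1) * (cvec G 2 (\<sigma> n) (\<sigma> (Suc n)) I a - (\<Sum>b\<in>iacts G I. \<sigma> n I b * cvec G 2 (\<sigma> n) (\<sigma> (Suc n)) I b))) \<le> B"
    if I: "I \<in> infosets G 2" for I
  proof -
    have A: "finite (iacts G I)" "iacts G I \<noteq> {}" using Aprops[of 2 I] I by auto
    have qs: "\<forall>n. \<forall>a\<in>iacts G I. q (Suc n) I a = max 0 (q n I a + cvec G 2 (\<sigma> n) (\<sigma> (Suc n)) I a - (\<Sum>b\<in>iacts G I. rm (q n I) (iacts G I) b * cvec G 2 (\<sigma> n) (\<sigma> (Suc n)) I b))"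
      using s2 I unfolding cf_vec_cvec2 rmeq by simp
    have bnd: "\<forall>n. \<forall>a\<in>iacts G I. \<bar>cvec G 2 (\<sigma> n) (\<sigma> (Suc n)) I a - (\<Sum>b\<in>iacts G I. rm (q n I) (iacts G I) b * cvec G 2 (\<sigma> n) (\<sigma> (Suc n)) I b)\<bar> \<le> l"
      unfolding rmeq l_def using regret_bound[OF wf, of 2 "\<sigma> _" "\<sigma> (Suc _)" I] full1 full2 I by simp
    note R = rmplus[OF A(1) A(2), of "\<lambda>n. q n I" "\<lambda>n. cvec G 2 (\<sigma> n) (\<sigma> (Suc n)) I" l, OF _ qs bnd]
    have R1: "\<forall>a\<in>iacts G I. (\<Sum>n<t. real (n + 1) * (cvec G 2 (\<sigma> n) (\<sigma> (Suc n)) I a - (\<Sum>b\<in>iacts G I. \<sigma> n I b * cvec G 2 (\<sigma> n) (\<sigma> (Suc n)) I b)))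
       \<le> real t * (l * sqrt (real (card (iacts G I)) * real t))"
      using R(1)[of t] q0 by (simp add: rmeq)
    show ?thesis using R1 Bmono[of I] I by fastforce
  qed

  define K1 where "K1 = (\<Sum>i<t. real (i + 1) * cfv G 1 (\<sigma> i) (\<sigma> i) [])"
  define K2 where "K2 = (\<Sum>i<t. real (i + 1) * cfv G 2 (\<sigma> i) (\<sigma> (Suc i)) [])"

  have SUP1: "exp_util G (reach G 1 s) (\<lambda>h. c * (\<Sum>i=0..<t. real (i + 1) * reach G 2 (\<sigma> i) h))
      \<le> c * (K1 + real (card (infosets G 1)) * B)" if s: "strategy G 1 s" for s
  proof -
    have fs: "fullstrat G 1 s" using strategy_full[OF wf _ s] by simp
    have "exp_util G (reach G 1 s) (\<lambda>h. c * (\<Sum>i=0..<t. real (i + 1) * reach G 2 (\<sigma> i) h)) =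
        c * (\<Sum>i<t. real (i + 1) * cfv G 1 s (\<sigma> i) [])"
      unfolding exp_util_lin2 exp_util_cfv1[OF wf] atLeast0LessThan ..
    also have "\<dots> \<le> c * (K1 + real (card (infosets G 1)) * B)"
    proof (rule mult_left_mono[OF _ c0])
      have "(\<Sum>n<t. real (n + 1) * (cfv G 1 s (\<sigma> n) [] - cfv G 1 (\<sigma> n) (\<sigma> n) [])) \<le> (\<Sum>I\<in>infosets G 1. B)"
        by (rule weighted_regret[OF wf _ fs]) (use P1 B0 in auto)
      then show "(\<Sum>i<t. real (i + 1) * cfv G 1 s (\<sigma> i) []) \<le> K1 + real (card (infosets G 1)) * B"
        unfolding K1_def by (simp add: right_diff_distrib sum_subtractf)
    qed
    finally show ?thesis .
  qed
  have SUP2: "- exp_util G (\<lambda>h. c * (\<Sum>i=1..t. real i * reach G 1 (\<sigma> i) h)) (reach G 2 s)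
      \<le> c * (K2 + real (card (infosets G 2)) * B)" if s: "strategy G 2 s" for s
  proof -
    have fs: "fullstrat G 2 s" using strategy_full[OF wf _ s] by simp
    have "- exp_util G (\<lambda>h. c * (\<Sum>i=1..t. real i * reach G 1 (\<sigma> i) h)) (reach G 2 s) =
        - (c * (\<Sum>i=1..t. real i * cfv G 1 (\<sigma> i) s []))"
      unfolding exp_util_lin1 exp_util_cfv1[OF wf] ..
    also have "\<dots> = c * (\<Sum>i<t. real (i + 1) * cfv G 2 s (\<sigma> (Suc i)) [])"
      unfolding sum_shift1 by (simp add: cfv2_cfv1[OF wf] sum_negf)
    also have "\<dots> \<le> c * (K2 + real (card (infosets G 2)) * B)"
    proof (rule mult_left_mono[OF _ c0])
      have "(\<Sum>n<t. real (n + 1) * (cfv G 2 s (\<sigma> (Suc n)) [] - cfv G 2 (\<sigma> n) (\<sigma> (Suc n)) [])) \<le> (\<Sum>I\<in>infosets G 2. B)"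
        by (rule weighted_regret[OF wf _ fs]) (use P2 B0 in auto)
      then show "(\<Sum>i<t. real (i + 1) * cfv G 2 s (\<sigma> (Suc i)) []) \<le> K2 + real (card (infosets G 2)) * B"
        unfolding K2_def by (simp add: right_diff_distrib sum_subtractf)
    qed
    finally show ?thesis .
  qed
  have K12: "K1 + K2 \<le> 0"
  proof -
    have mon: "cfv G 1 (\<sigma> i) (\<sigma> i) [] \<le> cfv G 1 (\<sigma> (Suc i)) (\<sigma> i) []" for i
    proof -
      have "cfv G 1 (\<sigma> (Suc i)) (\<sigma> i) [] - cfv G 1 (\<sigma> i) (\<sigma> i) [] =
        (\<Sum>I\<in>infosets G 1. reach G 1 (\<sigma> (Suc i)) (rep I) *
          (\<Sum>a\<in>iacts G I. \<sigma> (Suc i) I a * (cvec G 1 (\<sigma> i) (\<sigma> i) I a - (\<Sum>b\<in>iacts G I. \<sigma> i I b * cvec G 1 (\<sigma> i) (\<sigma> i) I b))))"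
        by (rule regret_form[OF wf _ full1]) simp
      also have "\<dots> \<ge> 0"
      proof (rule sum_nonneg)
        fix I assume I: "I \<in> infosets G 1"
        have r: "rep I \<in> I" using rep_props(1)[OF wf _ I] by simp
        have "rep I \<in> hist G" using rep_props(3)[OF wf _ I r] by (simp add: nonterm_def)
        then have "0 \<le> reach G 1 (\<sigma> (Suc i)) (rep I)" using reach_01[OF wf full1] by blast
        then show "0 \<le> reach G 1 (\<sigma> (Suc i)) (rep I) *
          (\<Sum>a\<in>iacts G I. \<sigma> (Suc i) I a * (cvec G 1 (\<sigma> i) (\<sigma> i) I a - (\<Sum>b\<in>iacts G I. \<sigma> i I b * cvec G 1 (\<sigma> i) (\<sigma> i) I b)))"
          using P1[OF I] by simp
      qed
      finally show ?thesis by simp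
    qed
    have "K1 + K2 = (\<Sum>i<t. real (i + 1) * (cfv G 1 (\<sigma> i) (\<sigma> i) [] - cfv G 1 (\<sigma> (Suc i)) (\<sigma> i) []))"
      unfolding K1_def K2_def cfv2_cfv1[OF wf] by (simp add: right_diff_distrib sum_subtractf sum_negf)
    also have "\<dots> \<le> 0"
      by (rule sum_nonpos) (use mon in \<open>simp add: mult_nonneg_nonpos\<close>)
    finally show ?thesis .
  qed
  have ne1: "{s. strategy G 1 s} \<noteq> {}" using cfr_strategy[OF wf, of 1 q 0] by auto
  have ne2: "{s. strategy G 2 s} \<noteq> {}" using cfr_strategy[OF wf, of 2 q 0] by auto
  have sup1: "(SUP s\<in>{s. strategy G 1 s}. exp_util G (reach G 1 s) (\<lambda>h. c * (\<Sum>i=0..<t. real (i + 1) * reach G 2 (\<sigma> i) h)))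
      \<le> c * (K1 + real (card (infosets G 1)) * B)"
    by (rule cSUP_least[OF ne1]) (use SUP1 in blast)
  have sup2: "(SUP s\<in>{s. strategy G 2 s}. - exp_util G (\<lambda>h. c * (\<Sum>i=1..t. real i * reach G 1 (\<sigma> i) h)) (reach G 2 s))
      \<le> c * (K2 + real (card (infosets G 2)) * B)"
    by (rule cSUP_least[OF ne2]) (use SUP2 in blast)
  have disj: "infosets G 1 \<inter> infosets G 2 = {}"
  proof (rule ccontr)
    assume "infosets G 1 \<inter> infosets G 2 \<noteq> {}"
    then obtain I where I1: "I \<in> infosets G 1" and I2: "I \<in> infosets G 2" by blast
    have r: "rep I \<in> I" using rep_props(1)[OF wf _ I1] by simp
    show False using rep_props(3)[OF wf _ I1 r] rep_props(3)[OF wf _ I2 r] by simp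
  qed
  have card: "card (infosets G 1 \<union> infosets G 2) = card (infosets G 1) + card (infosets G 2)"
    by (rule card_Un_disjoint[OF fin_infosets[OF wf] fin_infosets[OF wf] disj])
  have "expl G
           (\<lambda>h. c * (\<Sum>i=1..t. real i * reach G 1 (\<sigma> i) h))
           (\<lambda>h. c * (\<Sum>i=0..<t. real (i + 1) * reach G 2 (\<sigma> i) h))
        \<le> c * (K1 + real (card (infosets G 1)) * B) + c * (K2 + real (card (infosets G 2)) * B)"
    unfolding expl_def using sup1 sup2 by linarith
  also have "\<dots> = c * (K1 + K2) + c * (real (card (infosets G 1 \<union> infosets G 2)) * B)"
    unfolding card by (simp add: algebra_simps)
  also have "\<dots> \<le> c * (real (card (infosets G 1 \<union> infosets G 2)) * B)"
    using K12 c0 by (simp add: mult_nonneg_nonpos)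
  also have "\<dots> \<le> 2 * real (card (infosets G 1 \<union> infosets G 2)) * l * sqrt (real k / real t)"
    unfolding c_def B_def by (rule final_arith[OF assms(3) l0]) simp
  finally show ?thesis unfolding c_def \<sigma>_def l_def k_def .
qed


end
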